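(* There is a constant $C$ such that the following holds. Let $k_1,k_2,k_3\in\mathbb{Z}$, $j_1,j_2,j_3\in\mathbb{Z}_+$, and let $f_{k_i,j_i}\in L^2(\mathbb{R}^2)$ be supported in $D_{k_i,j_i}$, $i=1,2$. Then: (a) $\|\mathbf{1}_{D_{k_3,j_3}}(f_{k_1,j_1}\ast f_{k_2,j_2})\|_{L^2}\leq C2^{\min(k_1,k_2,k_3)/2}2^{\min(j_1,j_2,j_3)/2}\prod_{i=1}^2\|f_{k_i,j_i}\|_{L^2}$. (b) If $\max(k_1,k_2,k_3)\geq\min(k_1,k_2,k_3)+5$ and $i\in\{1,2,3\}$, then $\|\mathbf{1}_{D_{k_3,j_3}}(f_{k_1,j_1}\ast f_{k_2,j_2})\|_{L^2}\leq C2^{(j_1+j_2+j_3)/2}2^{-(j_i+k_i)/2}\prod_{l=1}^2\|f_{k_l,j_l}\|_{L^2}$. (c) $\|\mathbf{1}_{D_{k_3,j_3}}(f_{k_1,j_1}\ast f_{k_2,j_2})\|_{L^2}\leq C2^{\min(j_1,j_2,j_3)/2+\mathrm{med}(j_1,j_2,j_3)/4}\prod_{i=1}^2\|f_{k_i,j_i}\|_{L^2}$. (d) Moreover $\mathbf{1}_{D_{k_3,j_3}}(f_{k_1,j_1}\ast f_{k_2,j_2})\equiv0$ unless $\max(k_1,k_2,k_3)\leq\mathrm{med}(k_1,k_2,k_3)+2$ and either $\max(j_1,j_2,j_3)\in[\widetilde k-8,\widetilde k+8]$, or $\max(j_1,j_2,j_3)\geq\widetilde k+8$ and $\max(j_1,j_2,j_3)-\mathrm{med}(j_1,j_2,j_3)\leq10$,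 where $\widetilde k=\min(k_1,k_2,k_3)+\mathrm{med}(k_1,k_2,k_3)$.
   Context: $\omega(\xi)=-\xi|\xi|$. For $l\in\mathbb{Z}$, $I_l=\{\xi:|\xi|\in[2^{l-1},2^{l+1}]\}$; $\widetilde I_0=[-2,2]$ and $\widetilde I_l=I_l$ for $l\ge1$. For $k\in\mathbb{Z}$, $j\in\mathbb{Z}_+$: $D_{k,j}=\{(\xi,\tau):\xi\in I_k,\ \tau-\omega(\xi)\in\widetilde I_j\}$ if $k\ge1$ and $D_{k,j}=\{(\xi,\tau):\xi\in I_k,\ \tau\in\widetilde I_j\}$ if $k\le0$. $\ast$ is convolution on $\mathbb{R}^2$ in $(\xi,\tau)$; $\mathbf{1}_D$ is the indicator of $D$. $\mathrm{med}$ denotes the median of three numbers. *)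

theory Defs
  imports "HOL-Analysis.Analysis"
begin

definition omega :: "real \<Rightarrow> real" where
  "omega \<xi> = - \<xi> * \<bar>\<xi>\<bar>"

definition Iset :: "int \<Rightarrow> real set" where
  "Iset l = {\<xi>. 2 powr (real_of_int l - 1) \<le> \<bar>\<xi>\<bar> \<and> \<bar>\<xi>\<bar> \<le> 2 powr (real_of_int l + 1)}"

definition Itil :: "nat \<Rightarrow> real set" where
  "Itil l = (if l = 0 then {-2..2} else Iset (int l))"

definition Dset :: "int \<Rightarrow> nat \<Rightarrow> (real \<times> real) set" where
  "Dset k j = (if k \<ge> 1
     then {(\<xi>, \<tau>). \<xi> \<in> Iset k \<and> \<tau> - omega \<xi> \<in> Itil j}
     else {(\<xi>, \<tau>). \<xi> \<in> Iset k \<and> \<tau> \<in> Itil j})"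

definition conv2 :: "(real \<times> real \<Rightarrow> complex) \<Rightarrow> (real \<times> real \<Rightarrow> complex) \<Rightarrow> real \<times> real \<Rightarrow> complex" where
  "conv2 f g x = (\<integral> y. f y * g (x - y) \<partial>lebesgue)"

definition L2norm :: "(real \<times> real \<Rightarrow> complex) \<Rightarrow> real" where
  "L2norm f = sqrt (\<integral> x. (cmod (f x))\<^sup>2 \<partial>lebesgue)"

definition is_L2 :: "(real \<times> real \<Rightarrow> complex) \<Rightarrow> bool" where
  "is_L2 f \<longleftrightarrow> f \<in> borel_measurable lebesgue \<and> integrable lebesgue (\<lambda>x. (cmod (f x))\<^sup>2)"

definition med3 :: "'a::linorder \<Rightarrow> 'a \<Rightarrow> 'a \<Rightarrow> 'a" where
  "med3 a b c = max (min a b) (min (max a b) c)"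

end

theory Submission
  imports Defs
begin


type_synonym pt = "real \<times> real"

lemma lborel_translate_nn:
  fixes g :: "pt \<Rightarrow> ennreal" and c :: pt
  assumes [measurable]: "g \<in> borel_measurable borel"
  shows "(\<integral>\<^sup>+x. g (x + c) \<partial>lborel) = (\<integral>\<^sup>+x. g x \<partial>lborel)"
proof -
  have "(\<integral>\<^sup>+x. g x \<partial>lborel) = (\<integral>\<^sup>+x. g x \<partial>(distr lborel borel ((+) c)))"
    by (simp add: lborel_distr_plus)
  also have "\<dots> = (\<integral>\<^sup>+x. g (c + x) \<partial>lborel)"
    by (subst nn_integral_distr) auto
  finally show ?thesis by (simp add: add.commute)
qed

lemma lborel_reflect_nn:
  fixes g :: "pt \<Rightarrow> ennreal" and c :: pt
  assumes [measurable]: "g \<in> borel_measurable borel"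
  shows "(\<integral>\<^sup>+y. g (c - y) \<partial>lborel) = (\<integral>\<^sup>+x. g x \<partial>lborel)"
proof -
  have eq: "(lborel::pt measure) = distr lborel borel (\<lambda>x. c + (-1::real) *\<^sub>R x)"
    using lborel_affine[of "-1::real" c] by (simp add: density_1)
  have "(\<integral>\<^sup>+x. g x \<partial>lborel) = (\<integral>\<^sup>+x. g x \<partial>(distr lborel borel (\<lambda>x. c + (-1::real) *\<^sub>R x)))"
    by (rule arg_cong[where f="\<lambda>M. nn_integral M g", OF eq])
  also have "\<dots> = (\<integral>\<^sup>+x. g (c + (-1::real) *\<^sub>R x) \<partial>lborel)"
    by (subst nn_integral_distr) auto
  finally show ?thesis by simp
qed

definition H :: "(pt \<Rightarrow> ennreal) \<Rightarrow> (pt \<Rightarrow> ennreal) \<Rightarrow> pt \<Rightarrow> ennreal" where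
  "H u v x = (\<integral>\<^sup>+y. u y * v (x - y) \<partial>lborel)"

definition good :: "pt set \<Rightarrow> pt set \<Rightarrow> pt set \<Rightarrow> real \<Rightarrow> bool" where
  "good A B E M \<longleftrightarrow> (\<forall>u v. u \<in> borel_measurable borel \<longrightarrow> v \<in> borel_measurable borel \<longrightarrow>
     (\<forall>y. y \<notin> A \<longrightarrow> u y = 0) \<longrightarrow> (\<forall>z. z \<notin> B \<longrightarrow> v z = 0) \<longrightarrow>
     (\<integral>\<^sup>+x. indicator E x * (H u v x)^2 \<partial>lborel)
        \<le> ennreal M * (\<integral>\<^sup>+y. (u y)^2 \<partial>lborel) * (\<integral>\<^sup>+z. (v z)^2 \<partial>lborel))"

lemma ind_sq: "(indicator S x :: ennreal)^2 = indicator S x"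
  by (simp split: split_indicator)

lemma good_T1:
  assumes [measurable]: "A \<in> sets borel" "B \<in> sets borel" "E \<in> sets borel"
    and fib: "\<And>x. x \<in> E \<Longrightarrow> emeasure lborel {y. y \<in> A \<and> x - y \<in> B} \<le> ennreal M"
  shows "good A B E M"
  unfolding good_def
proof (intro allI impI)
  fix u v :: "pt \<Rightarrow> ennreal"
  assume [measurable]: "u \<in> borel_measurable borel" "v \<in> borel_measurable borel"
    and uA: "\<forall>y. y \<notin> A \<longrightarrow> u y = 0" and vB: "\<forall>z. z \<notin> B \<longrightarrow> v z = 0"
  define S where "S x = {y. y \<in> A \<and> x - y \<in> B}" for x
  have S_meas[measurable]: "S x \<in> sets borel" for x
    unfolding S_def by measurable
  have Hx: "H u v x = (\<integral>\<^sup>+y. (u y * v (x - y)) * indicator (S x) y \<partial>lborel)" for x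
    unfolding H_def
  proof (rule nn_integral_cong)
    fix y
    show "u y * v (x - y) = u y * v (x - y) * indicator (S x) y"
    proof (cases "y \<in> S x")
      case False
      then have "y \<notin> A \<or> x - y \<notin> B" by (auto simp: S_def)
      then have "u y * v (x - y) = 0" using uA vB by (metis mult_zero_left mult_zero_right)
      then show ?thesis by (simp del: mult_eq_0_iff)
    qed simp
  qed
  have CS: "(H u v x)^2 \<le> (\<integral>\<^sup>+y. (u y)^2 * (v (x - y))^2 \<partial>lborel) * emeasure lborel (S x)" for x
  proof -
    have "(H u v x)^2 \<le> (\<integral>\<^sup>+y. (u y * v (x - y))^2 \<partial>lborel) * (\<integral>\<^sup>+y. (indicator (S x) y)^2 \<partial>lborel)"
      unfolding Hx by (rule Cauchy_Schwarz_nn_integral) auto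
    also have "\<dots> = (\<integral>\<^sup>+y. (u y)^2 * (v (x - y))^2 \<partial>lborel) * emeasure lborel (S x)"
      by (simp add: ind_sq power_mult_distrib)
    finally show ?thesis .
  qed
  have "(\<integral>\<^sup>+x. indicator E x * (H u v x)^2 \<partial>lborel)
      \<le> (\<integral>\<^sup>+x. ennreal M * (\<integral>\<^sup>+y. (u y)^2 * (v (x - y))^2 \<partial>lborel) \<partial>lborel)"
  proof (rule nn_integral_mono)
    fix x
    show "indicator E x * (H u v x)^2 \<le> ennreal M * (\<integral>\<^sup>+y. (u y)^2 * (v (x - y))^2 \<partial>lborel)"
    proof (cases "x \<in> E")
      case True
      have "(H u v x)^2 \<le> (\<integral>\<^sup>+y. (u y)^2 * (v (x - y))^2 \<partial>lborel) * ennreal M"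
        using CS[of x] fib[OF True] unfolding S_def
        by (meson order_trans mult_left_mono zero_le)
      then show ?thesis using True by (simp add: mult.commute)
    qed simp
  qed
  also have "\<dots> = ennreal M * (\<integral>\<^sup>+x. (\<integral>\<^sup>+y. (u y)^2 * (v (x - y))^2 \<partial>lborel) \<partial>lborel)"
    by (rule nn_integral_cmult) measurable
  also have "(\<integral>\<^sup>+x. (\<integral>\<^sup>+y. (u y)^2 * (v (x - y))^2 \<partial>lborel) \<partial>lborel)
      = (\<integral>\<^sup>+y. (\<integral>\<^sup>+x. (u y)^2 * (v (x - y))^2 \<partial>lborel) \<partial>lborel)"
    by (rule lborel_pair.Fubini'[symmetric]) measurable
  also have "\<dots> = (\<integral>\<^sup>+y. (u y)^2 * (\<integral>\<^sup>+z. (v z)^2 \<partial>lborel) \<partial>lborel)"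
  proof (rule nn_integral_cong)
    fix y
    have "(\<integral>\<^sup>+x. (u y)^2 * (v (x - y))^2 \<partial>lborel) = (u y)^2 * (\<integral>\<^sup>+x. (v (x + (- y)))^2 \<partial>lborel)"
      by (subst nn_integral_cmult) auto
    also have "\<dots> = (u y)^2 * (\<integral>\<^sup>+z. (v z)^2 \<partial>lborel)"
      by (subst lborel_translate_nn[where g="\<lambda>z. (v z)^2"]) auto
    finally show "(\<integral>\<^sup>+x. (u y)^2 * (v (x - y))^2 \<partial>lborel) = (u y)^2 * (\<integral>\<^sup>+z. (v z)^2 \<partial>lborel)" .
  qed
  also have "\<dots> = (\<integral>\<^sup>+y. (u y)^2 \<partial>lborel) * (\<integral>\<^sup>+z. (v z)^2 \<partial>lborel)"
    by (rule nn_integral_multc) auto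
  finally show "(\<integral>\<^sup>+x. indicator E x * (H u v x)^2 \<partial>lborel)
        \<le> ennreal M * (\<integral>\<^sup>+y. (u y)^2 \<partial>lborel) * (\<integral>\<^sup>+z. (v z)^2 \<partial>lborel)"
    by (simp add: mult.assoc)
qed

lemma good_T2:
  assumes [measurable]: "A \<in> sets borel" "B \<in> sets borel" "E \<in> sets borel"
    and fib: "\<And>z. z \<in> B \<Longrightarrow> emeasure lborel {y. y \<in> A \<and> z + y \<in> E} \<le> ennreal M"
  shows "good A B E M"
  unfolding good_def
proof (intro allI impI)
  fix u v :: "pt \<Rightarrow> ennreal"
  assume [measurable]: "u \<in> borel_measurable borel" "v \<in> borel_measurable borel"
    and uA: "\<forall>y. y \<notin> A \<longrightarrow> u y = 0" and vB: "\<forall>z. z \<notin> B \<longrightarrow> v z = 0"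
  define U where "U = (\<integral>\<^sup>+y. (u y)^2 \<partial>lborel)"
  define V where "V = (\<integral>\<^sup>+y. (v y)^2 \<partial>lborel)"
  have Hx: "H u v x = (\<integral>\<^sup>+y. u y * (v (x - y) * indicator A y) \<partial>lborel)" for x
    unfolding H_def
  proof (rule nn_integral_cong)
    fix y
    show "u y * v (x - y) = u y * (v (x - y) * indicator A y)"
    proof (cases "y \<in> A")
      case False
      then have "u y = 0" using uA by blast
      then show ?thesis by (simp del: mult_eq_0_iff)
    qed simp
  qed
  have CS: "(H u v x)^2 \<le> U * (\<integral>\<^sup>+y. (v (x - y))^2 * indicator A y \<partial>lborel)" for x
  proof -
    have "(H u v x)^2 \<le> (\<integral>\<^sup>+y. (u y)^2 \<partial>lborel) * (\<integral>\<^sup>+y. (v (x - y) * indicator A y)^2 \<partial>lborel)"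
      unfolding Hx by (rule Cauchy_Schwarz_nn_integral) auto
    also have "\<dots> = U * (\<integral>\<^sup>+y. (v (x - y))^2 * indicator A y \<partial>lborel)"
      by (simp add: U_def ind_sq power_mult_distrib)
    finally show ?thesis .
  qed
  have "(\<integral>\<^sup>+x. indicator E x * (H u v x)^2 \<partial>lborel)
      \<le> (\<integral>\<^sup>+x. U * (\<integral>\<^sup>+y. indicator E x * (v (x - y))^2 * indicator A y \<partial>lborel) \<partial>lborel)"
  proof (rule nn_integral_mono)
    fix x
    have "indicator E x * (H u v x)^2 \<le> indicator E x * (U * (\<integral>\<^sup>+y. (v (x - y))^2 * indicator A y \<partial>lborel))"
      using CS[of x] by (rule mult_left_mono) simp
    also have "\<dots> = U * (\<integral>\<^sup>+y. indicator E x * ((v (x - y))^2 * indicator A y) \<partial>lborel)"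
      by (subst nn_integral_cmult) (auto simp: mult.commute mult.left_commute)
    finally show "indicator E x * (H u v x)^2 \<le> U * (\<integral>\<^sup>+y. indicator E x * (v (x - y))^2 * indicator A y \<partial>lborel)"
      by (simp add: mult.assoc)
  qed
  also have "\<dots> = U * (\<integral>\<^sup>+x. (\<integral>\<^sup>+y. indicator E x * (v (x - y))^2 * indicator A y \<partial>lborel) \<partial>lborel)"
    by (rule nn_integral_cmult) measurable
  also have "(\<integral>\<^sup>+x. (\<integral>\<^sup>+y. indicator E x * (v (x - y))^2 * indicator A y \<partial>lborel) \<partial>lborel)
      = (\<integral>\<^sup>+y. (\<integral>\<^sup>+x. indicator E x * (v (x - y))^2 * indicator A y \<partial>lborel) \<partial>lborel)"
    by (rule lborel_pair.Fubini'[symmetric]) measurable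
  also have "\<dots> = (\<integral>\<^sup>+y. (\<integral>\<^sup>+z. indicator A y * indicator E (z + y) * (v z)^2 \<partial>lborel) \<partial>lborel)"
  proof (rule nn_integral_cong)
    fix y
    have "(\<integral>\<^sup>+x. indicator E x * (v (x - y))^2 * indicator A y \<partial>lborel)
        = (\<integral>\<^sup>+x. (\<lambda>w. indicator A y * indicator E (w + y) * (v w)^2) (x + (- y)) \<partial>lborel)"
      by (rule nn_integral_cong) (simp add: ac_simps)
    also have "\<dots> = (\<integral>\<^sup>+z. indicator A y * indicator E (z + y) * (v z)^2 \<partial>lborel)"
      by (rule lborel_translate_nn) measurable
    finally show "(\<integral>\<^sup>+x. indicator E x * (v (x - y))^2 * indicator A y \<partial>lborel)
        = (\<integral>\<^sup>+z. indicator A y * indicator E (z + y) * (v z)^2 \<partial>lborel)" .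
  qed
  also have "\<dots> = (\<integral>\<^sup>+z. (\<integral>\<^sup>+y. indicator A y * indicator E (z + y) * (v z)^2 \<partial>lborel) \<partial>lborel)"
    by (rule lborel_pair.Fubini') measurable
  also have "\<dots> = (\<integral>\<^sup>+z. (v z)^2 * emeasure lborel {y. y \<in> A \<and> z + y \<in> E} \<partial>lborel)"
  proof (rule nn_integral_cong)
    fix z
    have [measurable]: "{y. y \<in> A \<and> z + y \<in> E} \<in> sets borel" by measurable
    have "(\<integral>\<^sup>+y. indicator A y * indicator E (z + y) * (v z)^2 \<partial>lborel)
       = (\<integral>\<^sup>+y. (v z)^2 * indicator {y. y \<in> A \<and> z + y \<in> E} y \<partial>lborel)"
      by (rule nn_integral_cong) (simp split: split_indicator)
    also have "\<dots> = (v z)^2 * emeasure lborel {y. y \<in> A \<and> z + y \<in> E}"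
      by (subst nn_integral_cmult_indicator) auto
    finally show "(\<integral>\<^sup>+y. indicator A y * indicator E (z + y) * (v z)^2 \<partial>lborel)
       = (v z)^2 * emeasure lborel {y. y \<in> A \<and> z + y \<in> E}" .
  qed
  also have "\<dots> \<le> (\<integral>\<^sup>+z. (v z)^2 * ennreal M \<partial>lborel)"
  proof (rule nn_integral_mono)
    fix z
    show "(v z)^2 * emeasure lborel {y. y \<in> A \<and> z + y \<in> E} \<le> (v z)^2 * ennreal M"
    proof (cases "z \<in> B")
      case True
      have "emeasure lborel {y. y \<in> A \<and> z + y \<in> E} \<le> ennreal M" by (rule fib[OF True])
      then show ?thesis by (rule mult_left_mono) simp
    next
      case False then have "v z = 0" using vB by blast
      then show ?thesis by simp
    qed
  qed
  also have "\<dots> = V * ennreal M"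
    unfolding V_def by (rule nn_integral_multc) auto
  finally have "(\<integral>\<^sup>+x. indicator E x * (H u v x)^2 \<partial>lborel) \<le> U * (V * ennreal M)"
    by (rule order_trans) (auto intro: mult_left_mono)
  then show "(\<integral>\<^sup>+x. indicator E x * (H u v x)^2 \<partial>lborel)
        \<le> ennreal M * (\<integral>\<^sup>+y. (u y)^2 \<partial>lborel) * (\<integral>\<^sup>+z. (v z)^2 \<partial>lborel)"
    by (simp add: U_def V_def mult.commute mult.left_commute)
qed

lemma good_T3:
  assumes [measurable]: "A \<in> sets borel" "B \<in> sets borel" "E \<in> sets borel"
    and fib: "\<And>y. y \<in> A \<Longrightarrow> emeasure lborel {x. x \<in> E \<and> x - y \<in> B} \<le> ennreal M"
  shows "good A B E M"
  unfolding good_def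
proof (intro allI impI)
  fix u v :: "pt \<Rightarrow> ennreal"
  assume [measurable]: "u \<in> borel_measurable borel" "v \<in> borel_measurable borel"
    and uA: "\<forall>y. y \<notin> A \<longrightarrow> u y = 0" and vB: "\<forall>z. z \<notin> B \<longrightarrow> v z = 0"
  define U where "U = (\<integral>\<^sup>+y. (u y)^2 \<partial>lborel)"
  define V where "V = (\<integral>\<^sup>+y. (v y)^2 \<partial>lborel)"
  have Hx: "H u v x = (\<integral>\<^sup>+y. (u y * indicator B (x - y)) * v (x - y) \<partial>lborel)" for x
    unfolding H_def
  proof (rule nn_integral_cong)
    fix y
    show "u y * v (x - y) = (u y * indicator B (x - y)) * v (x - y)"
    proof (cases "x - y \<in> B")
      case False
      then have "v (x - y) = 0" using vB by blast
      then show ?thesis by (simp del: mult_eq_0_iff)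
    qed simp
  qed
  have CS: "(H u v x)^2 \<le> (\<integral>\<^sup>+y. (u y)^2 * indicator B (x - y) \<partial>lborel) * V" for x
  proof -
    have "(H u v x)^2 \<le> (\<integral>\<^sup>+y. (u y * indicator B (x - y))^2 \<partial>lborel) * (\<integral>\<^sup>+y. (v (x - y))^2 \<partial>lborel)"
      unfolding Hx by (rule Cauchy_Schwarz_nn_integral) auto
    also have "(\<integral>\<^sup>+y. (v (x - y))^2 \<partial>lborel) = V"
      unfolding V_def by (rule lborel_reflect_nn[where g="\<lambda>z. (v z)^2"]) measurable
    finally show ?thesis
      by (simp add: ind_sq power_mult_distrib)
  qed
  have "(\<integral>\<^sup>+x. indicator E x * (H u v x)^2 \<partial>lborel)
      \<le> (\<integral>\<^sup>+x. V * (\<integral>\<^sup>+y. indicator E x * ((u y)^2 * indicator B (x - y)) \<partial>lborel) \<partial>lborel)"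
  proof (rule nn_integral_mono)
    fix x
    have "indicator E x * (H u v x)^2 \<le> indicator E x * ((\<integral>\<^sup>+y. (u y)^2 * indicator B (x - y) \<partial>lborel) * V)"
      using CS[of x] by (rule mult_left_mono) simp
    also have "\<dots> = V * (\<integral>\<^sup>+y. indicator E x * ((u y)^2 * indicator B (x - y)) \<partial>lborel)"
      by (subst nn_integral_cmult) (auto simp: mult.commute mult.left_commute)
    finally show "indicator E x * (H u v x)^2 \<le> V * (\<integral>\<^sup>+y. indicator E x * ((u y)^2 * indicator B (x - y)) \<partial>lborel)" .
  qed
  also have "\<dots> = V * (\<integral>\<^sup>+x. (\<integral>\<^sup>+y. indicator E x * ((u y)^2 * indicator B (x - y)) \<partial>lborel) \<partial>lborel)"
    by (rule nn_integral_cmult) measurable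
  also have "(\<integral>\<^sup>+x. (\<integral>\<^sup>+y. indicator E x * ((u y)^2 * indicator B (x - y)) \<partial>lborel) \<partial>lborel)
      = (\<integral>\<^sup>+y. (\<integral>\<^sup>+x. indicator E x * ((u y)^2 * indicator B (x - y)) \<partial>lborel) \<partial>lborel)"
    by (rule lborel_pair.Fubini'[symmetric]) measurable
  also have "\<dots> = (\<integral>\<^sup>+y. (u y)^2 * emeasure lborel {x. x \<in> E \<and> x - y \<in> B} \<partial>lborel)"
  proof (rule nn_integral_cong)
    fix y
    have [measurable]: "{x. x \<in> E \<and> x - y \<in> B} \<in> sets borel" by measurable
    have "(\<integral>\<^sup>+x. indicator E x * ((u y)^2 * indicator B (x - y)) \<partial>lborel)
       = (\<integral>\<^sup>+x. (u y)^2 * indicator {x. x \<in> E \<and> x - y \<in> B} x \<partial>lborel)"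
      by (rule nn_integral_cong) (simp split: split_indicator)
    also have "\<dots> = (u y)^2 * emeasure lborel {x. x \<in> E \<and> x - y \<in> B}"
      by (subst nn_integral_cmult_indicator) auto
    finally show "(\<integral>\<^sup>+x. indicator E x * ((u y)^2 * indicator B (x - y)) \<partial>lborel)
       = (u y)^2 * emeasure lborel {x. x \<in> E \<and> x - y \<in> B}" .
  qed
  also have "\<dots> \<le> (\<integral>\<^sup>+y. (u y)^2 * ennreal M \<partial>lborel)"
  proof (rule nn_integral_mono)
    fix y
    show "(u y)^2 * emeasure lborel {x. x \<in> E \<and> x - y \<in> B} \<le> (u y)^2 * ennreal M"
    proof (cases "y \<in> A")
      case True
      have "emeasure lborel {x. x \<in> E \<and> x - y \<in> B} \<le> ennreal M" by (rule fib[OF True])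
      then show ?thesis by (rule mult_left_mono) simp
    next
      case False then have "u y = 0" using uA by blast
      then show ?thesis by simp
    qed
  qed
  also have "\<dots> = U * ennreal M"
    unfolding U_def by (rule nn_integral_multc) auto
  finally have "(\<integral>\<^sup>+x. indicator E x * (H u v x)^2 \<partial>lborel) \<le> V * (U * ennreal M)"
    by (rule order_trans) (auto intro: mult_left_mono)
  then show "(\<integral>\<^sup>+x. indicator E x * (H u v x)^2 \<partial>lborel)
        \<le> ennreal M * (\<integral>\<^sup>+y. (u y)^2 \<partial>lborel) * (\<integral>\<^sup>+z. (v z)^2 \<partial>lborel)"
    by (simp add: U_def V_def mult.commute mult.left_commute)
qed



lemma borel_version:
  fixes f :: "pt \<Rightarrow> complex"
  assumes f: "f \<in> borel_measurable lebesgue" and A[measurable]: "A \<in> sets borel"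
    and s: "\<forall>x. x \<notin> A \<longrightarrow> f x = 0"
  shows "\<exists>g. g \<in> borel_measurable borel \<and> (\<forall>x. x \<notin> A \<longrightarrow> g x = 0) \<and> (AE x in lborel. f x = g x)"
proof -
  have "(\<lambda>x. Re (f x)) \<in> borel_measurable (completion lborel)" using f by measurable
  from completion_ex_borel_measurable_real[OF this] obtain r where
    r: "r \<in> borel_measurable lborel" "AE x in lborel. Re (f x) = r x" by blast
  have "(\<lambda>x. Im (f x)) \<in> borel_measurable (completion lborel)" using f by measurable
  from completion_ex_borel_measurable_real[OF this] obtain i where
    i: "i \<in> borel_measurable lborel" "AE x in lborel. Im (f x) = i x" by blast
  have [measurable]: "r \<in> borel_measurable borel" "i \<in> borel_measurable borel"
    using r(1) i(1) by (simp_all add: measurable_lborel1)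
  define g where "g x = (if x \<in> A then complex_of_real (r x) + \<i> * complex_of_real (i x) else 0)" for x
  have "g \<in> borel_measurable borel" unfolding g_def by measurable
  moreover have "\<forall>x. x \<notin> A \<longrightarrow> g x = 0" by (simp add: g_def)
  moreover have "AE x in lborel. f x = g x"
    using r(2) i(2)
  proof eventually_elim
    case (elim x)
    show ?case
    proof (cases "x \<in> A")
      case True
      then show ?thesis using elim by (simp add: g_def complex_eq_iff)
    next
      case False
      then have "f x = 0" using s by blast
      then show ?thesis using False by (simp add: g_def)
    qed
  qed
  ultimately show ?thesis by blast
qed

lemma AE_reflect:
  assumes ae: "AE z in lborel. P (z::pt)"
  shows "AE y in lborel. P (x - y)"
proof -
  obtain N where N: "{z \<in> space lborel. \<not> P z} \<subseteq> N" "N \<in> null_sets lborel"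
  proof -
    from ae have "\<exists>N. {z \<in> space lborel. \<not> P z} \<subseteq> N \<and> N \<in> null_sets lborel"
      by (auto simp add: eventually_ae_filter)
    then show ?thesis using that by blast
  qed
  have eq: "(lborel::pt measure) = distr lborel borel (\<lambda>y. x + (-1::real) *\<^sub>R y)"
    using lborel_affine[of "-1::real" x] by (simp add: density_1)
  have Nb[measurable]: "N \<in> sets borel" using N by auto
  have "emeasure lborel ((\<lambda>y. x + (-1::real) *\<^sub>R y) -` N \<inter> space lborel)
      = emeasure (distr lborel borel (\<lambda>y. x + (-1::real) *\<^sub>R y)) N"
    by (subst emeasure_distr) auto
  also have "\<dots> = emeasure lborel N"
    by (rule arg_cong[where f="\<lambda>M. emeasure M N", OF eq[symmetric]])
  also have "\<dots> = 0" using N by auto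
  finally have "emeasure lborel ((\<lambda>y. x + (-1::real) *\<^sub>R y) -` N \<inter> space lborel) = 0" .
  moreover have "(\<lambda>y. x + (-1::real) *\<^sub>R y) -` N \<inter> space lborel \<in> sets lborel"
    by measurable
  ultimately have "(\<lambda>y. x + (-1::real) *\<^sub>R y) -` N \<inter> space lborel \<in> null_sets lborel"
    by (simp add: null_sets_def)
  then show ?thesis
    by (rule AE_I') (use N in auto)
qed

lemma conv_bound:
  fixes f1 f2 g1 g2 :: "pt \<Rightarrow> complex"
  assumes [measurable]: "g1 \<in> borel_measurable borel" "g2 \<in> borel_measurable borel"
    and ae1: "AE x in lborel. f1 x = g1 x" and ae2: "AE x in lborel. f2 x = g2 x"
  shows "ennreal (cmod (conv2 f1 f2 x)) \<le> H (\<lambda>y. ennreal (cmod (g1 y))) (\<lambda>y. ennreal (cmod (g2 y))) x"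
proof -
  have ae2': "AE y in lborel. f2 (x - y) = g2 (x - y)"
    using AE_reflect[OF ae2] .
  have H_eq: "H (\<lambda>y. ennreal (cmod (g1 y))) (\<lambda>y. ennreal (cmod (g2 y))) x
      = (\<integral>\<^sup>+y. ennreal (cmod (f1 y * f2 (x - y))) \<partial>lborel)"
    unfolding H_def
    by (rule nn_integral_cong_AE) (use ae1 ae2' in \<open>auto simp: norm_mult ennreal_mult\<close>)
  show ?thesis
  proof (cases "integrable lebesgue (\<lambda>y. f1 y * f2 (x - y))")
    case True
    have "ennreal (cmod (conv2 f1 f2 x)) \<le> (\<integral>\<^sup>+y. ennreal (norm (f1 y * f2 (x - y))) \<partial>lebesgue)"
      unfolding conv2_def by (rule integral_norm_bound_ennreal[OF True])
    also have "\<dots> = (\<integral>\<^sup>+y. ennreal (cmod (f1 y * f2 (x - y))) \<partial>lborel)"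
      by (rule nn_integral_completion)
    finally show ?thesis using H_eq by simp
  next
    case False
    then have "conv2 f1 f2 x = 0" unfolding conv2_def by (rule not_integrable_integral_eq)
    then show ?thesis by simp
  qed
qed

lemma L2_sq:
  assumes "is_L2 f" and "AE x in lborel. f x = g x"
  shows "(\<integral>\<^sup>+x. (ennreal (cmod (g x)))^2 \<partial>lborel) = ennreal ((L2norm f)^2)"
proof -
  have int: "integrable lebesgue (\<lambda>x. (cmod (f x))\<^sup>2)" using assms(1) by (simp add: is_L2_def)
  have "(\<integral>\<^sup>+x. (ennreal (cmod (g x)))^2 \<partial>lborel) = (\<integral>\<^sup>+x. ennreal ((cmod (f x))^2) \<partial>lborel)"
    by (rule nn_integral_cong_AE) (use assms(2) in \<open>auto simp: ennreal_power\<close>)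
  also have "\<dots> = (\<integral>\<^sup>+x. ennreal ((cmod (f x))^2) \<partial>lebesgue)"
    by (rule nn_integral_completion[symmetric])
  also have "\<dots> = ennreal (\<integral>x. (cmod (f x))^2 \<partial>lebesgue)"
    by (rule nn_integral_eq_integral[OF int]) auto
  also have "(\<integral>x. (cmod (f x))^2 \<partial>lebesgue) = (L2norm f)^2"
    unfolding L2norm_def by (simp add: integral_nonneg_AE)
  finally show ?thesis .
qed

lemma master:
  fixes f1 f2 :: "pt \<Rightarrow> complex"
  assumes L1: "is_L2 f1" and L2: "is_L2 f2"
    and s1: "\<forall>x. x \<notin> A \<longrightarrow> f1 x = 0" and s2: "\<forall>x. x \<notin> B \<longrightarrow> f2 x = 0"
    and [measurable]: "A \<in> sets borel" "B \<in> sets borel" "E \<in> sets borel"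
    and DE: "D3 \<subseteq> E" and gd: "good A B E M" and M: "M \<ge> 0"
  shows "L2norm (\<lambda>x. indicator D3 x * conv2 f1 f2 x) \<le> sqrt M * L2norm f1 * L2norm f2"
proof -
  obtain g1 where g1[measurable]: "g1 \<in> borel_measurable borel" and g1A: "\<forall>x. x \<notin> A \<longrightarrow> g1 x = 0"
    and ae1: "AE x in lborel. f1 x = g1 x"
    using borel_version[of f1 A] L1 s1 by (auto simp: is_L2_def)
  obtain g2 where g2[measurable]: "g2 \<in> borel_measurable borel" and g2B: "\<forall>x. x \<notin> B \<longrightarrow> g2 x = 0"
    and ae2: "AE x in lborel. f2 x = g2 x"
    using borel_version[of f2 B] L2 s2 by (auto simp: is_L2_def)
  define u where "u y = ennreal (cmod (g1 y))" for y
  define v where "v y = ennreal (cmod (g2 y))" for y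
  have [measurable]: "u \<in> borel_measurable borel" "v \<in> borel_measurable borel"
    unfolding u_def v_def by measurable
  have "\<forall>y. y \<notin> A \<longrightarrow> u y = 0" using g1A by (simp add: u_def)
  moreover have "\<forall>y. y \<notin> B \<longrightarrow> v y = 0" using g2B by (simp add: v_def)
  ultimately have main: "(\<integral>\<^sup>+x. indicator E x * (H u v x)^2 \<partial>lborel)
        \<le> ennreal M * (\<integral>\<^sup>+y. (u y)^2 \<partial>lborel) * (\<integral>\<^sup>+z. (v z)^2 \<partial>lborel)"
    using gd unfolding good_def by auto
  have U: "(\<integral>\<^sup>+y. (u y)^2 \<partial>lborel) = ennreal ((L2norm f1)^2)"
    unfolding u_def by (rule L2_sq[OF L1 ae1])
  have V: "(\<integral>\<^sup>+y. (v y)^2 \<partial>lborel) = ennreal ((L2norm f2)^2)"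
    unfolding v_def by (rule L2_sq[OF L2 ae2])
  define F where "F x = indicator D3 x * conv2 f1 f2 x" for x
  define R where "R = M * (L2norm f1)^2 * (L2norm f2)^2"
  have R0: "R \<ge> 0" using M by (simp add: R_def)
  have pw: "ennreal ((cmod (F x))^2) \<le> indicator E x * (H u v x)^2" for x
  proof (cases "x \<in> D3")
    case True
    then have xE: "x \<in> E" using DE by auto
    have "ennreal (cmod (F x)) = ennreal (cmod (conv2 f1 f2 x))" using True by (simp add: F_def)
    also have "\<dots> \<le> H u v x" unfolding u_def v_def by (rule conv_bound[OF g1 g2 ae1 ae2])
    finally have "(ennreal (cmod (F x)))^2 \<le> (H u v x)^2" by (rule power_mono) simp
    then show ?thesis using xE by (simp add: ennreal_power)
  next
    case False then show ?thesis by (simp add: F_def)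
  qed
  have I: "(\<integral>\<^sup>+x. ennreal ((cmod (F x))^2) \<partial>lebesgue) \<le> ennreal R"
  proof -
    have "(\<integral>\<^sup>+x. ennreal ((cmod (F x))^2) \<partial>lebesgue) = (\<integral>\<^sup>+x. ennreal ((cmod (F x))^2) \<partial>lborel)"
      by (rule nn_integral_completion)
    also have "\<dots> \<le> (\<integral>\<^sup>+x. indicator E x * (H u v x)^2 \<partial>lborel)"
      by (rule nn_integral_mono) (rule pw)
    also have "\<dots> \<le> ennreal M * ennreal ((L2norm f1)^2) * ennreal ((L2norm f2)^2)"
      using main U V by simp
    also have "\<dots> = ennreal R" using M by (simp add: R_def ennreal_mult)
    finally show ?thesis .
  qed
  have intle: "(\<integral>x. (cmod (F x))^2 \<partial>lebesgue) \<le> R"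
  proof (cases "integrable lebesgue (\<lambda>x. (cmod (F x))^2)")
    case True
    have "ennreal (\<integral>x. (cmod (F x))^2 \<partial>lebesgue) = (\<integral>\<^sup>+x. ennreal ((cmod (F x))^2) \<partial>lebesgue)"
      by (rule nn_integral_eq_integral[OF True, symmetric]) auto
    with I have "ennreal (\<integral>x. (cmod (F x))^2 \<partial>lebesgue) \<le> ennreal R" by simp
    then show ?thesis using R0 by (simp add: ennreal_le_iff)
  next
    case False
    then show ?thesis using R0 by (simp add: not_integrable_integral_eq)
  qed
  have "L2norm F = sqrt (\<integral>x. (cmod (F x))^2 \<partial>lebesgue)" by (simp add: L2norm_def)
  also have "\<dots> \<le> sqrt R" using intle by simp
  also have "sqrt R = sqrt M * L2norm f1 * L2norm f2"
    by (simp add: R_def real_sqrt_mult L2norm_def)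
  finally show ?thesis by (simp add: F_def[abs_def])
qed



lemma omega_borel[measurable]: "omega \<in> borel_measurable borel"
  unfolding omega_def[abs_def] by measurable

lemma fib_bound:
  fixes P :: "real set" and e :: "real \<Rightarrow> real"
  assumes [measurable]: "P \<in> sets borel" "e \<in> borel_measurable borel"
    and Ra: "Ra \<ge> 0" and Rb: "Rb \<ge> 0"
  shows "emeasure lborel {(s,t). s \<in> P \<and> \<bar>t - omega s\<bar> \<le> Ra \<and> \<bar>t - e s\<bar> \<le> Rb}
     \<le> ennreal (2 * min Ra Rb) * emeasure lborel {s. s \<in> P \<and> \<bar>omega s - e s\<bar> \<le> Ra + Rb}"
proof -
  define X where "X = {(s,t). s \<in> P \<and> \<bar>t - omega s\<bar> \<le> Ra \<and> \<bar>t - e s\<bar> \<le> Rb}"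
  define S where "S = {s. s \<in> P \<and> \<bar>omega s - e s\<bar> \<le> Ra + Rb}"
  have Xeq: "X = {p. fst p \<in> P \<and> \<bar>snd p - omega (fst p)\<bar> \<le> Ra \<and> \<bar>snd p - e (fst p)\<bar> \<le> Rb}"
    by (auto simp: X_def)
  have [measurable]: "(\<lambda>p. snd p - omega (fst p)) \<in> borel_measurable (borel \<Otimes>\<^sub>M borel)" by measurable
  have [measurable]: "(\<lambda>p. snd p - e (fst p)) \<in> borel_measurable (borel \<Otimes>\<^sub>M borel)" by measurable
  have "{p \<in> space (borel \<Otimes>\<^sub>M borel). fst p \<in> P \<and> \<bar>snd p - omega (fst p)\<bar> \<le> Ra \<and> \<bar>snd p - e (fst p)\<bar> \<le> Rb} \<in> sets (borel \<Otimes>\<^sub>M borel)" by measurable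
  then have Xm[measurable]: "X \<in> sets (lborel \<Otimes>\<^sub>M lborel)"
    unfolding Xeq by (simp add: space_pair_measure)
  have Sm[measurable]: "S \<in> sets borel" unfolding S_def by measurable
  have "emeasure (lborel::pt measure) X = emeasure (lborel \<Otimes>\<^sub>M lborel) X"
    by (simp add: lborel_prod)
  also have "\<dots> = (\<integral>\<^sup>+s. emeasure lborel (Pair s -` X) \<partial>lborel)"
    by (rule lborel.emeasure_pair_measure_alt[OF Xm])
  also have "\<dots> \<le> (\<integral>\<^sup>+s. ennreal (2 * min Ra Rb) * indicator S s \<partial>lborel)"
  proof (rule nn_integral_mono)
    fix s
    show "emeasure lborel (Pair s -` X) \<le> ennreal (2 * min Ra Rb) * indicator S s"
    proof (cases "s \<in> S")
      case False
      have "Pair s -` X = {}"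
      proof (rule ccontr)
        assume "Pair s -` X \<noteq> {}"
        then obtain t where "(s,t) \<in> X" by auto
        then have "s \<in> P" "\<bar>t - omega s\<bar> \<le> Ra" "\<bar>t - e s\<bar> \<le> Rb" by (auto simp: X_def)
        then have "s \<in> S" unfolding S_def by auto
        with False show False by simp
      qed
      then show ?thesis by simp
    next
      case True
      have sub1: "Pair s -` X \<subseteq> {omega s - Ra .. omega s + Ra}"
        by (auto simp: X_def abs_le_iff)
      have sub2: "Pair s -` X \<subseteq> {e s - Rb .. e s + Rb}"
        by (auto simp: X_def abs_le_iff)
      have "emeasure lborel (Pair s -` X) \<le> emeasure lborel {omega s - Ra .. omega s + Ra}"
        by (rule emeasure_mono[OF sub1]) simp
      also have "\<dots> = ennreal (2 * Ra)" using Ra by simp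
      finally have m1: "emeasure lborel (Pair s -` X) \<le> ennreal (2 * Ra)" .
      have "emeasure lborel (Pair s -` X) \<le> emeasure lborel {e s - Rb .. e s + Rb}"
        by (rule emeasure_mono[OF sub2]) simp
      also have "\<dots> = ennreal (2 * Rb)" using Rb by simp
      finally have m2: "emeasure lborel (Pair s -` X) \<le> ennreal (2 * Rb)" .
      have "emeasure lborel (Pair s -` X) \<le> ennreal (2 * min Ra Rb)"
        using m1 m2 by (cases "Ra \<le> Rb") (auto simp: min_def)
      then show ?thesis using True by simp
    qed
  qed
  also have "\<dots> = ennreal (2 * min Ra Rb) * emeasure lborel S"
    by (rule nn_integral_cmult_indicator) simp
  finally show ?thesis by (simp add: X_def S_def)
qed

lemma emeasure_ball_le:
  fixes S :: "real set"
  assumes "S \<subseteq> {s. \<bar>s - c\<bar> \<le> r}" "r \<ge> 0"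
  shows "emeasure lborel S \<le> ennreal (2 * r)"
proof -
  have "{s. \<bar>s - c\<bar> \<le> r} = {c - r .. c + r}" by (auto simp: abs_le_iff)
  then have "emeasure lborel S \<le> emeasure lborel {c - r .. c + r}"
    using emeasure_mono[OF assms(1)] by simp
  also have "\<dots> = ennreal (2 * r)" using assms(2) by simp
  finally show ?thesis .
qed

definition phi :: "real \<Rightarrow> real \<Rightarrow> real" where
  "phi d s = omega s - omega (s + d)"

lemma phi_borel[measurable]: "phi d \<in> borel_measurable borel"
  unfolding phi_def[abs_def] by measurable

lemma mid_pos:
  assumes "s \<le> 0" "s + d \<ge> 0"
  shows "phi d s = 2*(s + d/2)^2 + d^2/2 \<and> \<bar>\<bar>s + d\<bar> - \<bar>s\<bar>\<bar> = 2*\<bar>s + d/2\<bar>"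
proof
  have a: "\<bar>s\<bar> = -s" "\<bar>s + d\<bar> = s + d" using assms by auto
  show "phi d s = 2*(s + d/2)^2 + d^2/2" unfolding phi_def omega_def a by (simp add: power2_eq_square algebra_simps)
  have "\<bar>\<bar>s + d\<bar> - \<bar>s\<bar>\<bar> = \<bar>2 * (s + d/2)\<bar>" unfolding a by (simp add: algebra_simps)
  then show "\<bar>\<bar>s + d\<bar> - \<bar>s\<bar>\<bar> = 2*\<bar>s + d/2\<bar>" by (simp only: abs_mult abs_numeral)
qed
lemma mid_neg:
  assumes "s \<ge> 0" "s + d \<le> 0"
  shows "phi d s = -(2*(s + d/2)^2 + d^2/2) \<and> \<bar>\<bar>s + d\<bar> - \<bar>s\<bar>\<bar> = 2*\<bar>s + d/2\<bar>"
proof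
  have a: "\<bar>s\<bar> = s" "\<bar>s + d\<bar> = -(s + d)" using assms by auto
  show "phi d s = -(2*(s + d/2)^2 + d^2/2)" unfolding phi_def omega_def a by (simp add: power2_eq_square algebra_simps)
  have "\<bar>\<bar>s + d\<bar> - \<bar>s\<bar>\<bar> = \<bar>2 * (s + d/2)\<bar>" unfolding a by (simp add: algebra_simps)
  then show "\<bar>\<bar>s + d\<bar> - \<bar>s\<bar>\<bar> = 2*\<bar>s + d/2\<bar>" by (simp only: abs_mult abs_numeral)
qed

lemma left_piece:
  assumes "s \<le> 0" "s + d \<le> 0"
  shows "phi d s = -2 * d * s - d^2"
proof -
  have a: "\<bar>s\<bar> = -s" "\<bar>s + d\<bar> = -(s + d)" using assms by auto
  show ?thesis unfolding phi_def omega_def a by (simp add: power2_eq_square algebra_simps)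
qed

lemma right_piece:
  assumes "s \<ge> 0" "s + d \<ge> 0"
  shows "phi d s = 2 * d * s + d^2"
proof -
  have a: "\<bar>s\<bar> = s" "\<bar>s + d\<bar> = s + d" using assms by auto
  show ?thesis unfolding phi_def omega_def a by (simp add: power2_eq_square algebra_simps)
qed

lemma lin_piece:
  fixes d s e W :: real
  assumes "d \<noteq> 0" "\<bar>2 * d * s + e\<bar> \<le> W"
  shows "\<bar>s - (- e / (2 * d))\<bar> \<le> W / (2 * \<bar>d\<bar>)"
proof -
  have "s - (- e / (2 * d)) = (2 * d * s + e) / (2 * d)" using assms(1) by (simp add: field_simps)
  then have "\<bar>s - (- e / (2 * d))\<bar> = \<bar>2 * d * s + e\<bar> / (2 * \<bar>d\<bar>)" by (simp add: abs_mult)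
  also have "\<dots> \<le> W / (2 * \<bar>d\<bar>)" using assms by (intro divide_right_mono) auto
  finally show ?thesis .
qed

lemma sublevel_main:
  fixes d c W b L :: real
  assumes d: "d \<noteq> 0" and W: "W \<ge> 0" and L: "L \<ge> 0"
    and sq: "\<And>\<alpha>. \<exists>a. \<forall>u. \<alpha> \<le> u^2 \<and> u^2 \<le> \<alpha> + W \<and> b \<le> 2 * \<bar>u\<bar> \<longrightarrow> a \<le> \<bar>u\<bar> \<and> \<bar>u\<bar> \<le> a + L"
  shows "emeasure lborel {s. \<bar>phi d s + c\<bar> \<le> W \<and> b \<le> \<bar>\<bar>s + d\<bar> - \<bar>s\<bar>\<bar>}
     \<le> ennreal (2 * W / \<bar>d\<bar> + 2 * L)"
proof -
  define \<sigma> where "\<sigma> = (if d > 0 then 1 else -1::real)"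
  define \<alpha> where "\<alpha> = - (\<sigma> * c) / 2 - d^2 / 4 - W / 2"
  obtain a where a: "\<And>u. \<alpha> \<le> u^2 \<Longrightarrow> u^2 \<le> \<alpha> + W \<Longrightarrow> b \<le> 2 * \<bar>u\<bar> \<Longrightarrow> a \<le> \<bar>u\<bar> \<and> \<bar>u\<bar> \<le> a + L"
    using sq[of \<alpha>] by blast
  define r where "r = W / (2 * \<bar>d\<bar>)"
  have r0: "r \<ge> 0" using W by (simp add: r_def)
  define S1 where "S1 = {s. \<bar>s - (- (c - d^2) / (2 * (-d)))\<bar> \<le> r}"
  define S2 where "S2 = {s. \<bar>s - (- (d^2 + c) / (2 * d))\<bar> \<le> r}"
  define S3 where "S3 = {s. \<bar>s - (a + L/2 - d/2)\<bar> \<le> L/2}"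
  define S4 where "S4 = {s. \<bar>s - (- a - L/2 - d/2)\<bar> \<le> L/2}"
  have sub: "{s. \<bar>phi d s + c\<bar> \<le> W \<and> b \<le> \<bar>\<bar>s + d\<bar> - \<bar>s\<bar>\<bar>} \<subseteq> S1 \<union> S2 \<union> S3 \<union> S4"
  proof
    fix s assume "s \<in> {s. \<bar>phi d s + c\<bar> \<le> W \<and> b \<le> \<bar>\<bar>s + d\<bar> - \<bar>s\<bar>\<bar>}"
    then have h: "\<bar>phi d s + c\<bar> \<le> W" "b \<le> \<bar>\<bar>s + d\<bar> - \<bar>s\<bar>\<bar>" by auto
    consider "s \<le> 0 \<and> s + d \<le> 0" | "s \<ge> 0 \<and> s + d \<ge> 0" | "(s \<le> 0 \<and> s + d \<ge> 0) \<or> (s \<ge> 0 \<and> s + d \<le> 0)"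
      by linarith
    then show "s \<in> S1 \<union> S2 \<union> S3 \<union> S4"
    proof cases
      case 1
      then have "phi d s = -2 * d * s - d^2" using left_piece by blast
      then have "\<bar>2 * (-d) * s + (c - d^2)\<bar> \<le> W" using h(1) by simp
      from lin_piece[OF _ this] d have "s \<in> S1"
        by (simp add: S1_def r_def)
      then show ?thesis by auto
    next
      case 2
      then have "phi d s = 2 * d * s + d^2" using right_piece by blast
      then have "\<bar>2 * d * s + (d^2 + c)\<bar> \<le> W" using h(1) by (simp add: add.assoc)
      from lin_piece[OF d this] have "s \<in> S2"
        by (simp add: S2_def r_def)
      then show ?thesis by auto
    next
      case 3
      define u where "u = s + d/2"
      have "(s \<le> 0 \<and> s + d \<ge> 0 \<and> d > 0) \<or> (s \<ge> 0 \<and> s + d \<le> 0 \<and> d < 0) \<or> (s = 0 \<and> d = 0)"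
        using 3 d by linarith
      then have C: "(s \<le> 0 \<and> s + d \<ge> 0 \<and> d > 0) \<or> (s \<ge> 0 \<and> s + d \<le> 0 \<and> d < 0)" using d by auto
      have e1: "phi d s = \<sigma> * (2 * u^2 + d^2/2)" and e2: "\<bar>\<bar>s + d\<bar> - \<bar>s\<bar>\<bar> = 2 * \<bar>u\<bar>"
        using C mid_pos[of s d] mid_neg[of s d] by (auto simp: u_def \<sigma>_def)
      have "\<bar>\<sigma> * (2 * u^2 + d^2/2) + c\<bar> \<le> W" using h(1) e1 by simp
      then have Y: "\<bar>2 * u^2 + d^2/2 + \<sigma> * c\<bar> \<le> W"
      proof (cases "d > 0")
        case True then show ?thesis using \<open>\<bar>\<sigma> * (2 * u^2 + d^2/2) + c\<bar> \<le> W\<close> by (simp add: \<sigma>_def)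
      next
        case False
        then have "\<sigma> = -1" by (simp add: \<sigma>_def)
        then have "\<sigma> * (2 * u^2 + d^2/2) + c = - (2 * u^2 + d^2/2 + \<sigma> * c)" by simp
        then show ?thesis using \<open>\<bar>\<sigma> * (2 * u^2 + d^2/2) + c\<bar> \<le> W\<close> by (simp only: abs_minus_cancel)
      qed
      have "\<alpha> \<le> u^2" using Y unfolding \<alpha>_def abs_le_iff by linarith
      moreover have "u^2 \<le> \<alpha> + W" using Y unfolding \<alpha>_def abs_le_iff by linarith
      moreover have "b \<le> 2 * \<bar>u\<bar>" using h(2) e2 by simp
      ultimately have "a \<le> \<bar>u\<bar> \<and> \<bar>u\<bar> \<le> a + L" using a by blast
      then have "s \<in> S3 \<or> s \<in> S4"
        unfolding S3_def S4_def u_def mem_Collect_eq abs_le_iff by linarith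
      then show ?thesis by auto
    qed
  qed
  have m: "S1 \<in> sets borel" "S2 \<in> sets borel" "S3 \<in> sets borel" "S4 \<in> sets borel"
    unfolding S1_def S2_def S3_def S4_def by measurable
  have "emeasure lborel {s. \<bar>phi d s + c\<bar> \<le> W \<and> b \<le> \<bar>\<bar>s + d\<bar> - \<bar>s\<bar>\<bar>} \<le> emeasure lborel (S1 \<union> S2 \<union> S3 \<union> S4)"
    by (rule emeasure_mono[OF sub]) (use m in auto)
  also have "\<dots> \<le> emeasure lborel (S1 \<union> S2 \<union> S3) + emeasure lborel S4"
    by (rule emeasure_subadditive) (use m in auto)
  also have "emeasure lborel (S1 \<union> S2 \<union> S3) \<le> emeasure lborel (S1 \<union> S2) + emeasure lborel S3"
    by (rule emeasure_subadditive) (use m in auto)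
  also have "emeasure lborel (S1 \<union> S2) \<le> emeasure lborel S1 + emeasure lborel S2"
    by (rule emeasure_subadditive) (use m in auto)
  also have "emeasure lborel S1 \<le> ennreal (2 * r)"
    unfolding S1_def by (rule emeasure_ball_le[OF order_refl r0])
  also have "emeasure lborel S2 \<le> ennreal (2 * r)"
    unfolding S2_def by (rule emeasure_ball_le[OF order_refl r0])
  also have "emeasure lborel S3 \<le> ennreal (2 * (L/2))"
    unfolding S3_def by (rule emeasure_ball_le[OF order_refl]) (use L in simp)
  also have "emeasure lborel S4 \<le> ennreal (2 * (L/2))"
    unfolding S4_def by (rule emeasure_ball_le[OF order_refl]) (use L in simp)
  finally have "emeasure lborel {s. \<bar>phi d s + c\<bar> \<le> W \<and> b \<le> \<bar>\<bar>s + d\<bar> - \<bar>s\<bar>\<bar>}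
     \<le> ennreal (2 * r) + ennreal (2 * r) + ennreal (2 * (L / 2)) + ennreal (2 * (L / 2))"
    by (simp add: add_mono)
  also have "\<dots> = ennreal (2 * W / \<bar>d\<bar> + 2 * L)"
  proof -
    have wd: "W / \<bar>d\<bar> \<ge> 0" using W by simp
    have q: "2 * W / \<bar>d\<bar> + 2 * L = ((W / \<bar>d\<bar> + W / \<bar>d\<bar>) + L) + L" by simp
    have r2: "2 * r = W / \<bar>d\<bar>" by (simp add: r_def)
    have L2: "2 * (L / 2) = L" by simp
    have e: "ennreal (((W/\<bar>d\<bar> + W/\<bar>d\<bar>) + L) + L) = ennreal (W/\<bar>d\<bar>) + ennreal (W/\<bar>d\<bar>) + ennreal L + ennreal L"
      using wd L by (simp only: ennreal_plus add_nonneg_nonneg)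
    show ?thesis unfolding r2 L2 by (subst q) (rule e[symmetric])
  qed
  finally show ?thesis .
qed



lemma sq_gen:
  fixes \<alpha> W b :: real
  assumes W: "W \<ge> 0"
  shows "\<exists>a. \<forall>u. \<alpha> \<le> u^2 \<and> u^2 \<le> \<alpha> + W \<and> b \<le> 2 * \<bar>u\<bar> \<longrightarrow> a \<le> \<bar>u\<bar> \<and> \<bar>u\<bar> \<le> a + sqrt W"
proof (rule exI[where x="sqrt (max \<alpha> 0)"], intro allI impI conjI)
  fix u :: real
  assume h: "\<alpha> \<le> u^2 \<and> u^2 \<le> \<alpha> + W \<and> b \<le> 2 * \<bar>u\<bar>"
  have u: "\<bar>u\<bar> = sqrt (u^2)" by simp
  have "max \<alpha> 0 \<le> u^2" using h by simp
  then show "sqrt (max \<alpha> 0) \<le> \<bar>u\<bar>" unfolding u by (rule real_sqrt_le_mono)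
  have "u^2 \<le> max \<alpha> 0 + W" using h by linarith
  then have "sqrt (u^2) \<le> sqrt (max \<alpha> 0 + W)" by (rule real_sqrt_le_mono)
  also have "\<dots> \<le> sqrt (max \<alpha> 0) + sqrt W" by (rule sqrt_add_le_add_sqrt) (use W in auto)
  finally show "\<bar>u\<bar> \<le> sqrt (max \<alpha> 0) + sqrt W" by simp
qed

lemma sq_pos:
  fixes \<alpha> W b :: real
  assumes W: "W \<ge> 0" and b: "b > 0"
  shows "\<exists>a. \<forall>u. \<alpha> \<le> u^2 \<and> u^2 \<le> \<alpha> + W \<and> b \<le> 2 * \<bar>u\<bar> \<longrightarrow> a \<le> \<bar>u\<bar> \<and> \<bar>u\<bar> \<le> a + W / b"
proof (rule exI[where x="max (sqrt (max \<alpha> 0)) (b / 2)"], intro allI impI conjI)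
  fix u :: real
  define a where "a = max (sqrt (max \<alpha> 0)) (b / 2)"
  assume h: "\<alpha> \<le> u^2 \<and> u^2 \<le> \<alpha> + W \<and> b \<le> 2 * \<bar>u\<bar>"
  have u: "\<bar>u\<bar> = sqrt (u^2)" by simp
  have "max \<alpha> 0 \<le> u^2" using h by simp
  then have "sqrt (max \<alpha> 0) \<le> \<bar>u\<bar>" unfolding u by (rule real_sqrt_le_mono)
  moreover have "b / 2 \<le> \<bar>u\<bar>" using h by simp
  ultimately have ua: "a \<le> \<bar>u\<bar>" by (simp add: a_def)
  then show "max (sqrt (max \<alpha> 0)) (b / 2) \<le> \<bar>u\<bar>" by (simp add: a_def)
  have a0: "a \<ge> 0" "a \<ge> b / 2" using b by (auto simp: a_def intro: max.coboundedI2)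
  have "sqrt (max \<alpha> 0) \<le> a" by (simp add: a_def)
  then have "(sqrt (max \<alpha> 0))^2 \<le> a^2" by (rule power_mono) simp
  then have aa: "\<alpha> \<le> a^2" by simp
  have "(\<bar>u\<bar> - a) * b \<le> (\<bar>u\<bar> - a) * (\<bar>u\<bar> + a)"
    by (rule mult_left_mono) (use ua a0 in auto)
  also have "\<dots> = u^2 - a^2" by (simp add: power2_eq_square algebra_simps)
  also have "\<dots> \<le> W" using h aa by linarith
  finally have "(\<bar>u\<bar> - a) * b \<le> W" .
  then have "\<bar>u\<bar> - a \<le> W / b" using b by (simp add: le_divide_eq)
  then show "\<bar>u\<bar> \<le> max (sqrt (max \<alpha> 0)) (b / 2) + W / b" by (simp add: a_def)
qed

lemma sub_c:
  assumes d: "d \<noteq> 0" and W: "W \<ge> 0"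
  shows "emeasure lborel {s. \<bar>phi d s + c\<bar> \<le> W} \<le> ennreal (2 * W / \<bar>d\<bar> + 2 * sqrt W)"
proof -
  have "{s. \<bar>phi d s + c\<bar> \<le> W} = {s. \<bar>phi d s + c\<bar> \<le> W \<and> 0 \<le> \<bar>\<bar>s + d\<bar> - \<bar>s\<bar>\<bar>}" by auto
  also have "emeasure lborel \<dots> \<le> ennreal (2 * W / \<bar>d\<bar> + 2 * sqrt W)"
    by (rule sublevel_main[OF d W _ sq_gen[OF W]]) (use W in simp)
  finally show ?thesis .
qed

lemma sub_b:
  assumes d: "d \<noteq> 0" and W: "W \<ge> 0" and b: "b > 0"
  shows "emeasure lborel {s. \<bar>phi d s + c\<bar> \<le> W \<and> b \<le> \<bar>\<bar>s + d\<bar> - \<bar>s\<bar>\<bar>} \<le> ennreal (2 * W / \<bar>d\<bar> + 2 * (W / b))"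
  by (rule sublevel_main[OF d W _ sq_pos[OF W b]]) (use b W in simp)

lemma min3_1: "p \<le> q \<Longrightarrow> p \<le> r \<Longrightarrow> min p (min q r) = (p::real)" by simp
lemma min3_2: "q \<le> p \<Longrightarrow> q \<le> r \<Longrightarrow> min p (min q r) = (q::real)" by simp
lemma min3_3: "r \<le> p \<Longrightarrow> r \<le> q \<Longrightarrow> min p (min q r) = (r::real)" by simp
lemma res_eq:
  fixes a b :: real
  shows "\<bar>omega a + omega b - omega (a + b)\<bar> = 2 * min (\<bar>a\<bar> * \<bar>b\<bar>) (min (\<bar>a\<bar> * \<bar>a + b\<bar>) (\<bar>b\<bar> * \<bar>a + b\<bar>))"
proof -
  consider "a \<ge> 0" "b \<ge> 0" | "a \<le> 0" "b \<le> 0" | "a \<ge> 0" "b \<le> 0" "a + b \<ge> 0" | "a \<ge> 0" "b \<le> 0" "a + b \<le> 0"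
    | "a \<le> 0" "b \<ge> 0" "a + b \<ge> 0" | "a \<le> 0" "b \<ge> 0" "a + b \<le> 0" by linarith
  then show ?thesis
  proof cases
    case 1
    then have ab: "\<bar>a\<bar> = a" "\<bar>b\<bar> = b" "\<bar>a + b\<bar> = a + b" by auto
    have r: "omega a + omega b - omega (a + b) = 2 * (a * b)" unfolding omega_def ab by (simp add: algebra_simps power2_eq_square)
    have f: "a * b \<le> a * (a + b)" "a * b \<le> b * (a + b)" using 1 by (simp_all add: mult_left_mono mult_right_mono mult_left_mono_neg mult_right_mono_neg algebra_simps)
    have m: "min (\<bar>a\<bar> * \<bar>b\<bar>) (min (\<bar>a\<bar> * \<bar>a + b\<bar>) (\<bar>b\<bar> * \<bar>a + b\<bar>)) = \<bar>a\<bar> * \<bar>b\<bar>"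
      by (rule min3_1) (use f in \<open>simp_all add: ab algebra_simps\<close>)
    show ?thesis unfolding m r by (simp add: abs_mult)
  next
    case 2
    then have ab: "\<bar>a\<bar> = -a" "\<bar>b\<bar> = -b" "\<bar>a + b\<bar> = -(a + b)" by auto
    have r: "omega a + omega b - omega (a + b) = - 2 * (a * b)" unfolding omega_def ab by (simp add: algebra_simps power2_eq_square)
    have f: "a * b \<le> a * (a + b)" "a * b \<le> b * (a + b)" using 2 by (simp_all add: mult_left_mono mult_right_mono mult_left_mono_neg mult_right_mono_neg algebra_simps)
    have m: "min (\<bar>a\<bar> * \<bar>b\<bar>) (min (\<bar>a\<bar> * \<bar>a + b\<bar>) (\<bar>b\<bar> * \<bar>a + b\<bar>)) = \<bar>a\<bar> * \<bar>b\<bar>"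
      by (rule min3_1) (use f in \<open>simp_all add: ab algebra_simps\<close>)
    show ?thesis unfolding m r by (simp add: abs_mult)
  next
    case 3
    then have ab: "\<bar>a\<bar> = a" "\<bar>b\<bar> = -b" "\<bar>a + b\<bar> = a + b" by auto
    have r: "omega a + omega b - omega (a + b) = 2 * (b * (a + b))" unfolding omega_def ab by (simp add: algebra_simps power2_eq_square)
    have f1: "- b * (a + b) \<le> - b * a" using 3 by (simp_all add: mult_left_mono mult_right_mono mult_left_mono_neg mult_right_mono_neg algebra_simps)
    have f2: "-b * (a + b) \<le> a * (a + b)" by (rule mult_right_mono) (use 3 in auto)
    note f = f1 f2
    have m: "min (\<bar>a\<bar> * \<bar>b\<bar>) (min (\<bar>a\<bar> * \<bar>a + b\<bar>) (\<bar>b\<bar> * \<bar>a + b\<bar>)) = \<bar>b\<bar> * \<bar>a + b\<bar>"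
      by (rule min3_3) (use f in \<open>simp_all add: ab algebra_simps\<close>)
    show ?thesis unfolding m r by (simp add: abs_mult)
  next
    case 4
    then have ab: "\<bar>a\<bar> = a" "\<bar>b\<bar> = -b" "\<bar>a + b\<bar> = -(a + b)" by auto
    have r: "omega a + omega b - omega (a + b) = - 2 * (a * (a + b))" unfolding omega_def ab by (simp add: algebra_simps power2_eq_square)
    have f1: "- a * (a + b) \<le> - b * a" using 4 by (simp_all add: mult_left_mono mult_right_mono mult_left_mono_neg mult_right_mono_neg algebra_simps)
    have f2: "- a * (a + b) \<le> b * (a + b)" by (rule mult_right_mono_neg) (use 4 in auto)
    note f = f1 f2
    have m: "min (\<bar>a\<bar> * \<bar>b\<bar>) (min (\<bar>a\<bar> * \<bar>a + b\<bar>) (\<bar>b\<bar> * \<bar>a + b\<bar>)) = \<bar>a\<bar> * \<bar>a + b\<bar>"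
      by (rule min3_2) (use f in \<open>simp_all add: ab algebra_simps\<close>)
    show ?thesis unfolding m r by (simp add: abs_mult)
  next
    case 5
    then have ab: "\<bar>a\<bar> = -a" "\<bar>b\<bar> = b" "\<bar>a + b\<bar> = a + b" by auto
    have r: "omega a + omega b - omega (a + b) = 2 * (a * (a + b))" unfolding omega_def ab by (simp add: algebra_simps power2_eq_square)
    have f1: "- a * (a + b) \<le> - a * b" using 5 by (simp_all add: mult_left_mono mult_right_mono mult_left_mono_neg mult_right_mono_neg algebra_simps)
    have f2: "- a * (a + b) \<le> b * (a + b)" by (rule mult_right_mono) (use 5 in auto)
    note f = f1 f2
    have m: "min (\<bar>a\<bar> * \<bar>b\<bar>) (min (\<bar>a\<bar> * \<bar>a + b\<bar>) (\<bar>b\<bar> * \<bar>a + b\<bar>)) = \<bar>a\<bar> * \<bar>a + b\<bar>"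
      by (rule min3_2) (use f in \<open>simp_all add: ab algebra_simps\<close>)
    show ?thesis unfolding m r by (simp add: abs_mult)
  next
    case 6
    then have ab: "\<bar>a\<bar> = -a" "\<bar>b\<bar> = b" "\<bar>a + b\<bar> = -(a + b)" by auto
    have r: "omega a + omega b - omega (a + b) = - 2 * (b * (a + b))" unfolding omega_def ab by (simp add: algebra_simps power2_eq_square)
    have f1: "- b * (a + b) \<le> - a * b" using 6 by (simp_all add: mult_left_mono mult_right_mono mult_left_mono_neg mult_right_mono_neg algebra_simps)
    have f2: "- b * (a + b) \<le> a * (a + b)" by (rule mult_right_mono_neg) (use 6 in auto)
    note f = f1 f2
    have m: "min (\<bar>a\<bar> * \<bar>b\<bar>) (min (\<bar>a\<bar> * \<bar>a + b\<bar>) (\<bar>b\<bar> * \<bar>a + b\<bar>)) = \<bar>b\<bar> * \<bar>a + b\<bar>"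
      by (rule min3_3) (use f in \<open>simp_all add: ab algebra_simps\<close>)
    show ?thesis unfolding m r by (simp add: abs_mult)
  qed
qed

lemma geo_real:
  fixes a b c :: real
  assumes c: "a + b = c" and m: "max \<bar>a\<bar> (max \<bar>b\<bar> \<bar>c\<bar>) \<ge> 8 * min \<bar>a\<bar> (min \<bar>b\<bar> \<bar>c\<bar>)"
  shows "\<bar>\<bar>b\<bar> - \<bar>a\<bar>\<bar> \<ge> 3/4 * \<bar>c\<bar> \<and> \<bar>\<bar>c\<bar> - \<bar>a\<bar>\<bar> \<ge> 3/4 * \<bar>b\<bar> \<and> \<bar>\<bar>c\<bar> - \<bar>b\<bar>\<bar> \<ge> 3/4 * \<bar>a\<bar>"
proof -
  consider "a \<ge> 0" "b \<ge> 0" | "a \<le> 0" "b \<le> 0" | "a \<ge> 0" "b \<le> 0" "c \<ge> 0" | "a \<ge> 0" "b \<le> 0" "c \<le> 0"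
    | "a \<le> 0" "b \<ge> 0" "c \<ge> 0" | "a \<le> 0" "b \<ge> 0" "c \<le> 0" by linarith
  then show ?thesis
  proof cases
    case 1
    then have "\<bar>a\<bar> = a" "\<bar>b\<bar> = b" "\<bar>c\<bar> = a + b" using c by auto
    then show ?thesis using m 1 by (auto simp: max_def min_def split: if_splits)
  next
    case 2
    then have "\<bar>a\<bar> = -a" "\<bar>b\<bar> = -b" "\<bar>c\<bar> = -a - b" using c by auto
    then show ?thesis using m 2 by (auto simp: max_def min_def split: if_splits)
  next
    case 3
    then have "\<bar>a\<bar> = a" "\<bar>b\<bar> = -b" "\<bar>c\<bar> = a + b" using c by auto
    then show ?thesis using m 3 by (auto simp: max_def min_def split: if_splits)
  next
    case 4
    then have "\<bar>a\<bar> = a" "\<bar>b\<bar> = -b" "\<bar>c\<bar> = - a - b" using c by auto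
    then show ?thesis using m 4 by (auto simp: max_def min_def split: if_splits)
  next
    case 5
    then have "\<bar>a\<bar> = -a" "\<bar>b\<bar> = b" "\<bar>c\<bar> = a + b" using c by auto
    then show ?thesis using m 5 by (auto simp: max_def min_def split: if_splits)
  next
    case 6
    then have "\<bar>a\<bar> = -a" "\<bar>b\<bar> = b" "\<bar>c\<bar> = - a - b" using c by auto
    then show ?thesis using m 6 by (auto simp: max_def min_def split: if_splits)
  qed
qed


definition G :: "int \<Rightarrow> real \<Rightarrow> pt set" where
  "G k R = {p. fst p \<in> Iset k \<and> \<bar>snd p - omega (fst p)\<bar> \<le> R}"

lemma Iset_borel[measurable]: "Iset k \<in> sets borel"
  unfolding Iset_def by measurable

lemma G_borel[measurable]: "G k R \<in> sets borel"
proof -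
  have [measurable]: "(\<lambda>p. snd p - omega (fst p)) \<in> borel_measurable (borel \<Otimes>\<^sub>M borel)" by measurable
  have "{p \<in> space (borel \<Otimes>\<^sub>M borel). fst p \<in> Iset k \<and> \<bar>snd p - omega (fst p)\<bar> \<le> R} \<in> sets (borel \<Otimes>\<^sub>M borel)"
    by measurable
  then show ?thesis unfolding borel_prod by (simp add: G_def space_pair_measure)
qed

lemma omega_minus: "omega (- x) = - omega x" by (simp add: omega_def)

lemma abs_eq_neg: "x = - y \<Longrightarrow> \<bar>x\<bar> = \<bar>y::real\<bar>" by simp

lemma good_mono: "good A B E M \<Longrightarrow> M \<le> M' \<Longrightarrow> good A B E M'"
  unfolding good_def
  by (meson order_trans mult_right_mono ennreal_leI zero_le)

lemma AE_fst_notin: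
  fixes F :: "real set" assumes fin: "finite F"
  shows "AE y in (lborel::pt measure). fst y \<notin> F"
proof -
  have Fb: "F \<in> sets borel" using fin by (simp add: finite_imp_closed borel_closed)
  have "emeasure lborel F = 0" using fin by (simp add: emeasure_lborel_countable countable_finite)
  then have "F \<in> null_sets lborel" using Fb by (simp add: null_sets_def)
  then have "F \<times> (UNIV::real set) \<in> null_sets (lborel \<Otimes>\<^sub>M lborel)"
    by (rule lborel.times_in_null_sets1) simp
  then have "F \<times> (UNIV::real set) \<in> null_sets (lborel :: pt measure)" by (simp add: lborel_prod)
  then show ?thesis by (rule AE_I') auto
qed

lemma conv_zero:
  assumes fin: "finite F" and h: "\<forall>y. f1 y * f2 (x - y) \<noteq> 0 \<longrightarrow> fst y \<in> F"
  shows "conv2 f1 f2 x = 0"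
  unfolding conv2_def
proof (rule integral_eq_zero_AE)
  have "AE y in lborel. f1 y * f2 (x - y) = 0"
    using AE_fst_notin[OF fin] by eventually_elim (use h in blast)
  then show "AE y in lebesgue. f1 y * f2 (x - y) = 0" by (rule AE_completion)
qed

lemma fiber1:
  assumes Ra: "Ra \<ge> 0" and Rb: "Rb \<ge> 0"
  shows "emeasure lborel {y. y \<in> G k1 Ra \<and> (\<xi>,\<tau>) - y \<in> G k2 Rb}
    \<le> ennreal (2 * min Ra Rb) * emeasure lborel {s. (s \<in> Iset k1 \<and> \<xi> - s \<in> Iset k2) \<and> \<bar>phi (-\<xi>) s + (-\<tau>)\<bar> \<le> Ra + Rb}"
proof -
  define P where "P = {s. s \<in> Iset k1 \<and> \<xi> - s \<in> Iset k2}"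
  define e where "e s = \<tau> - omega (\<xi> - s)" for s
  have [measurable]: "P \<in> sets borel" unfolding P_def by measurable
  have [measurable]: "e \<in> borel_measurable borel" unfolding e_def[abs_def] by measurable
  have "{y. y \<in> G k1 Ra \<and> (\<xi>,\<tau>) - y \<in> G k2 Rb} = {(s,t). s \<in> P \<and> \<bar>t - omega s\<bar> \<le> Ra \<and> \<bar>t - e s\<bar> \<le> Rb}"
  proof -
    have "\<bar>\<tau> - t - omega (\<xi> - s)\<bar> = \<bar>t - e s\<bar>" for s t by (rule abs_eq_neg) (simp add: e_def)
    then show ?thesis by (auto simp: G_def P_def)
  qed
  also have "emeasure lborel \<dots> \<le> ennreal (2 * min Ra Rb) * emeasure lborel {s. s \<in> P \<and> \<bar>omega s - e s\<bar> \<le> Ra + Rb}"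
    by (rule fib_bound) (use Ra Rb in auto)
  also have "{s. s \<in> P \<and> \<bar>omega s - e s\<bar> \<le> Ra + Rb} = {s. (s \<in> Iset k1 \<and> \<xi> - s \<in> Iset k2) \<and> \<bar>phi (-\<xi>) s + (-\<tau>)\<bar> \<le> Ra + Rb}"
  proof -
    have "omega s - e s = phi (-\<xi>) s + (-\<tau>)" for s
    proof -
      have "omega (\<xi> - s) = - omega (s + - \<xi>)" using omega_minus[of "s + - \<xi>"] by simp
      then show ?thesis by (simp add: e_def phi_def)
    qed
    then show ?thesis by (auto simp: P_def)
  qed
  finally show ?thesis .
qed

lemma fiber2:
  assumes Ra: "Ra \<ge> 0" and Rb: "Rb \<ge> 0"
  shows "emeasure lborel {y. y \<in> G k1 Ra \<and> (\<xi>,\<tau>) + y \<in> G k3 Rb}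
    \<le> ennreal (2 * min Ra Rb) * emeasure lborel {s. (s \<in> Iset k1 \<and> \<xi> + s \<in> Iset k3) \<and> \<bar>phi \<xi> s + \<tau>\<bar> \<le> Ra + Rb}"
proof -
  define P where "P = {s. s \<in> Iset k1 \<and> \<xi> + s \<in> Iset k3}"
  define e where "e s = omega (\<xi> + s) - \<tau>" for s
  have [measurable]: "P \<in> sets borel" unfolding P_def by measurable
  have [measurable]: "e \<in> borel_measurable borel" unfolding e_def[abs_def] by measurable
  have "{y. y \<in> G k1 Ra \<and> (\<xi>,\<tau>) + y \<in> G k3 Rb} = {(s,t). s \<in> P \<and> \<bar>t - omega s\<bar> \<le> Ra \<and> \<bar>t - e s\<bar> \<le> Rb}"
  proof -
    have "\<bar>\<tau> + t - omega (\<xi> + s)\<bar> = \<bar>t - e s\<bar>" for s t by (simp add: e_def algebra_simps)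
    then show ?thesis by (auto simp: G_def P_def)
  qed
  also have "emeasure lborel \<dots> \<le> ennreal (2 * min Ra Rb) * emeasure lborel {s. s \<in> P \<and> \<bar>omega s - e s\<bar> \<le> Ra + Rb}"
    by (rule fib_bound) (use Ra Rb in auto)
  also have "{s. s \<in> P \<and> \<bar>omega s - e s\<bar> \<le> Ra + Rb} = {s. (s \<in> Iset k1 \<and> \<xi> + s \<in> Iset k3) \<and> \<bar>phi \<xi> s + \<tau>\<bar> \<le> Ra + Rb}"
  proof -
    have "omega s - e s = phi \<xi> s + \<tau>" for s
      by (simp add: e_def phi_def add.commute)
    then show ?thesis by (auto simp: P_def)
  qed
  finally show ?thesis .
qed

lemma fiber3:
  assumes Ra: "Ra \<ge> 0" and Rb: "Rb \<ge> 0"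
  shows "emeasure lborel {x. x \<in> G k3 Ra \<and> x - (\<xi>,\<tau>) \<in> G k2 Rb}
    \<le> ennreal (2 * min Ra Rb) * emeasure lborel {s. (s \<in> Iset k3 \<and> s - \<xi> \<in> Iset k2) \<and> \<bar>phi (-\<xi>) s + (-\<tau>)\<bar> \<le> Ra + Rb}"
proof -
  define P where "P = {s. s \<in> Iset k3 \<and> s - \<xi> \<in> Iset k2}"
  define e where "e s = \<tau> + omega (s - \<xi>)" for s
  have [measurable]: "P \<in> sets borel" unfolding P_def by measurable
  have [measurable]: "e \<in> borel_measurable borel" unfolding e_def[abs_def] by measurable
  have "{x. x \<in> G k3 Ra \<and> x - (\<xi>,\<tau>) \<in> G k2 Rb} = {(s,t). s \<in> P \<and> \<bar>t - omega s\<bar> \<le> Ra \<and> \<bar>t - e s\<bar> \<le> Rb}"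
  proof -
    have "\<bar>t - \<tau> - omega (s - \<xi>)\<bar> = \<bar>t - e s\<bar>" for s t by (simp add: e_def algebra_simps)
    then show ?thesis by (auto simp: G_def P_def)
  qed
  also have "emeasure lborel \<dots> \<le> ennreal (2 * min Ra Rb) * emeasure lborel {s. s \<in> P \<and> \<bar>omega s - e s\<bar> \<le> Ra + Rb}"
    by (rule fib_bound) (use Ra Rb in auto)
  also have "{s. s \<in> P \<and> \<bar>omega s - e s\<bar> \<le> Ra + Rb} = {s. (s \<in> Iset k3 \<and> s - \<xi> \<in> Iset k2) \<and> \<bar>phi (-\<xi>) s + (-\<tau>)\<bar> \<le> Ra + Rb}"
  proof -
    have "omega s - e s = phi (-\<xi>) s + (-\<tau>)" for s
      by (simp add: e_def phi_def)
    then show ?thesis by (auto simp: P_def)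
  qed
  finally show ?thesis .
qed

lemma good1:
  assumes R: "R1 \<ge> 0" "R2 \<ge> 0" and Q: "Q \<ge> 0"
    and h: "\<And>\<xi> \<tau>. (\<xi>,\<tau>) \<in> G k3 R3 \<Longrightarrow>
      emeasure lborel {s. (s \<in> Iset k1 \<and> \<xi> - s \<in> Iset k2) \<and> \<bar>phi (-\<xi>) s + (-\<tau>)\<bar> \<le> R1 + R2} \<le> ennreal Q"
  shows "good (G k1 R1) (G k2 R2) (G k3 R3) (2 * min R1 R2 * Q)"
proof (rule good_T1)
  fix x assume x: "x \<in> G k3 R3"
  obtain \<xi> \<tau> where xe: "x = (\<xi>,\<tau>)" by (cases x)
  have "emeasure lborel {y. y \<in> G k1 R1 \<and> x - y \<in> G k2 R2}
     \<le> ennreal (2 * min R1 R2) * emeasure lborel {s. (s \<in> Iset k1 \<and> \<xi> - s \<in> Iset k2) \<and> \<bar>phi (-\<xi>) s + (-\<tau>)\<bar> \<le> R1 + R2}"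
    unfolding xe by (rule fiber1[OF R])
  also have "\<dots> \<le> ennreal (2 * min R1 R2) * ennreal Q"
    by (rule mult_left_mono) (use h x xe in auto)
  also have "\<dots> = ennreal (2 * min R1 R2 * Q)" by (rule ennreal_mult[symmetric]) (use R Q in auto)
  finally show "emeasure lborel {y. y \<in> G k1 R1 \<and> x - y \<in> G k2 R2} \<le> ennreal (2 * min R1 R2 * Q)" .
qed auto

lemma good2:
  assumes R: "R1 \<ge> 0" "R3 \<ge> 0" and Q: "Q \<ge> 0"
    and h: "\<And>\<xi> \<tau>. (\<xi>,\<tau>) \<in> G k2 R2 \<Longrightarrow>
      emeasure lborel {s. (s \<in> Iset k1 \<and> \<xi> + s \<in> Iset k3) \<and> \<bar>phi \<xi> s + \<tau>\<bar> \<le> R1 + R3} \<le> ennreal Q"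
  shows "good (G k1 R1) (G k2 R2) (G k3 R3) (2 * min R1 R3 * Q)"
proof (rule good_T2)
  fix z assume z: "z \<in> G k2 R2"
  obtain \<xi> \<tau> where ze: "z = (\<xi>,\<tau>)" by (cases z)
  have "emeasure lborel {y. y \<in> G k1 R1 \<and> z + y \<in> G k3 R3}
     \<le> ennreal (2 * min R1 R3) * emeasure lborel {s. (s \<in> Iset k1 \<and> \<xi> + s \<in> Iset k3) \<and> \<bar>phi \<xi> s + \<tau>\<bar> \<le> R1 + R3}"
    unfolding ze by (rule fiber2[OF R])
  also have "\<dots> \<le> ennreal (2 * min R1 R3) * ennreal Q"
    by (rule mult_left_mono) (use h z ze in auto)
  also have "\<dots> = ennreal (2 * min R1 R3 * Q)" by (rule ennreal_mult[symmetric]) (use R Q in auto)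
  finally show "emeasure lborel {y. y \<in> G k1 R1 \<and> z + y \<in> G k3 R3} \<le> ennreal (2 * min R1 R3 * Q)" .
qed auto

lemma good3:
  assumes R: "R3 \<ge> 0" "R2 \<ge> 0" and Q: "Q \<ge> 0"
    and h: "\<And>\<xi> \<tau>. (\<xi>,\<tau>) \<in> G k1 R1 \<Longrightarrow>
      emeasure lborel {s. (s \<in> Iset k3 \<and> s - \<xi> \<in> Iset k2) \<and> \<bar>phi (-\<xi>) s + (-\<tau>)\<bar> \<le> R3 + R2} \<le> ennreal Q"
  shows "good (G k1 R1) (G k2 R2) (G k3 R3) (2 * min R3 R2 * Q)"
proof (rule good_T3)
  fix y assume y: "y \<in> G k1 R1"
  obtain \<xi> \<tau> where ye: "y = (\<xi>,\<tau>)" by (cases y)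
  have "emeasure lborel {x. x \<in> G k3 R3 \<and> x - y \<in> G k2 R2}
     \<le> ennreal (2 * min R3 R2) * emeasure lborel {s. (s \<in> Iset k3 \<and> s - \<xi> \<in> Iset k2) \<and> \<bar>phi (-\<xi>) s + (-\<tau>)\<bar> \<le> R3 + R2}"
    unfolding ye by (rule fiber3[OF R])
  also have "\<dots> \<le> ennreal (2 * min R3 R2) * ennreal Q"
    by (rule mult_left_mono) (use h y ye in auto)
  also have "\<dots> = ennreal (2 * min R3 R2 * Q)" by (rule ennreal_mult[symmetric]) (use R Q in auto)
  finally show "emeasure lborel {x. x \<in> G k3 R3 \<and> x - y \<in> G k2 R2} \<le> ennreal (2 * min R3 R2 * Q)" .
qed auto



lemma p2_pos[simp]: "(2::real) powr x > 0" by simp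

lemma p2_mono: "x \<le> y \<Longrightarrow> (2::real) powr x \<le> 2 powr y" by (rule powr_mono) auto

lemma p2_min: "(2::real) powr (min x y) = min (2 powr x) (2 powr y)"
  by (cases "x \<le> y") (auto simp: min_def p2_mono intro: order.antisym)

lemma p2_max: "(2::real) powr (max x y) = max (2 powr x) (2 powr y)"
  by (cases "x \<le> y") (auto simp: max_def p2_mono intro: order.antisym)

lemma p2_sqrt: "sqrt ((2::real) powr x) = 2 powr (x / 2)"
proof -
  have "sqrt ((2::real) powr x) = (2 powr x) powr (1/2)" by (simp add: powr_half_sqrt)
  also have "\<dots> = 2 powr (x / 2)" by (simp add: powr_powr)
  finally show ?thesis .
qed

lemma Iset_le:
  assumes "s \<in> Iset k"
  shows "2 powr (real_of_int k) / 2 \<le> \<bar>s\<bar> \<and> \<bar>s\<bar> \<le> 2 * 2 powr (real_of_int k)"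
proof -
  have "(2::real) powr (real_of_int k - 1) = 2 powr (real_of_int k) / 2" by (simp add: powr_diff)
  moreover have "(2::real) powr (real_of_int k + 1) = 2 * 2 powr (real_of_int k)" by (simp add: powr_add)
  ultimately show ?thesis using assms by (simp add: Iset_def)
qed

lemma gen_a:
  assumes "S \<subseteq> {s. \<bar>s - c1\<bar> \<le> 2 * 2 powr Ka}" "S \<subseteq> {s. \<bar>s - c2\<bar> \<le> 2 * 2 powr Kb}"
  shows "emeasure lborel S \<le> ennreal (4 * 2 powr (min Ka Kb))"
proof -
  have a: "emeasure lborel S \<le> ennreal (2 * (2 * 2 powr Ka))"
    by (rule emeasure_ball_le[OF assms(1)]) simp
  have b: "emeasure lborel S \<le> ennreal (2 * (2 * 2 powr Kb))"
    by (rule emeasure_ball_le[OF assms(2)]) simp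
  show ?thesis
  proof (cases "Ka \<le> Kb")
    case True then show ?thesis using a by (simp add: min_def)
  next
    case False then show ?thesis using b by (simp add: min_def)
  qed
qed

lemma gen_c:
  assumes S: "S \<subseteq> {s. \<bar>phi d s + c\<bar> \<le> W}" and d: "\<bar>d\<bar> \<ge> 2 powr Kd / 2" and W: "W \<ge> 0"
  shows "emeasure lborel S \<le> ennreal (4 * W / 2 powr Kd + 2 * sqrt W)"
proof -
  have d0: "d \<noteq> 0" using d by (auto simp: not_le[symmetric])
  have dpos: "\<bar>d\<bar> > 0" using d0 by simp
  have "emeasure lborel S \<le> emeasure lborel {s. \<bar>phi d s + c\<bar> \<le> W}"
    by (rule emeasure_mono[OF S]) measurable
  also have "\<dots> \<le> ennreal (2 * W / \<bar>d\<bar> + 2 * sqrt W)" by (rule sub_c[OF d0 W])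
  also have "\<dots> \<le> ennreal (4 * W / 2 powr Kd + 2 * sqrt W)"
  proof (rule ennreal_leI)
    have "2 * W / \<bar>d\<bar> \<le> 2 * W / (2 powr Kd / 2)"
      by (rule divide_left_mono) (use d W dpos in \<open>auto intro: mult_pos_pos\<close>)
    then show "2 * W / \<bar>d\<bar> + 2 * sqrt W \<le> 4 * W / 2 powr Kd + 2 * sqrt W" by simp
  qed
  finally show ?thesis .
qed

lemma gen_b:
  assumes S: "S \<subseteq> {s. \<bar>phi d s + c\<bar> \<le> W \<and> 3/8 * 2 powr Kd \<le> \<bar>\<bar>s + d\<bar> - \<bar>s\<bar>\<bar>}"
    and d: "\<bar>d\<bar> \<ge> 2 powr Kd / 2" and W: "W \<ge> 0"
  shows "emeasure lborel S \<le> ennreal (10 * W / 2 powr Kd)"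
proof -
  have d0: "d \<noteq> 0" using d by (auto simp: not_le[symmetric])
  have dpos: "\<bar>d\<bar> > 0" using d0 by simp
  have b: "3/8 * 2 powr Kd > (0::real)" by simp
  have "emeasure lborel S \<le> emeasure lborel {s. \<bar>phi d s + c\<bar> \<le> W \<and> 3/8 * 2 powr Kd \<le> \<bar>\<bar>s + d\<bar> - \<bar>s\<bar>\<bar>}"
    by (rule emeasure_mono[OF S]) measurable
  also have "\<dots> \<le> ennreal (2 * W / \<bar>d\<bar> + 2 * (W / (3/8 * 2 powr Kd)))" by (rule sub_b[OF d0 W b])
  also have "\<dots> \<le> ennreal (10 * W / 2 powr Kd)"
  proof (rule ennreal_leI)
    have "2 * W / \<bar>d\<bar> \<le> 2 * W / (2 powr Kd / 2)"
      by (rule divide_left_mono) (use d W dpos in \<open>auto intro: mult_pos_pos\<close>)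
    also have "\<dots> = 4 * W / 2 powr Kd" by simp
    finally have 1: "2 * W / \<bar>d\<bar> \<le> 4 * W / 2 powr Kd" .
    have 2: "2 * (W / (3/8 * 2 powr Kd)) = 16/3 * W / 2 powr Kd" by (simp add: field_simps)
    have 3: "16/3 * W / 2 powr Kd \<le> 6 * W / 2 powr Kd"
      by (rule divide_right_mono) (use W in auto)
    show "2 * W / \<bar>d\<bar> + 2 * (W / (3/8 * 2 powr Kd)) \<le> 10 * W / 2 powr Kd"
      using 1 2 3 by (simp add: add_divide_distrib[symmetric])
  qed
  finally show ?thesis .
qed

definition Rj :: "nat \<Rightarrow> real" where "Rj j = 6 * 2 powr real j"

lemma Rj_pos: "Rj j > 0" by (simp add: Rj_def)

lemma min_Rj: "min (Rj a) (Rj b) = 6 * 2 powr (min (real a) (real b))"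
  by (simp add: Rj_def p2_min min_mult_distrib_left)

lemma arith_a:
  "2 * min (Rj a) (Rj b) * (4 * 2 powr m) = 48 * 2 powr (min (real a) (real b) + m)"
  by (simp add: min_Rj powr_add)

lemma arith_b:
  "2 * min (Rj a) (Rj b) * (10 * (Rj a + Rj b) / 2 powr K) \<le> 1440 * 2 powr (real a + real b - K)"
proof -
  define p where "p = (2::real) powr real a"
  define q where "q = (2::real) powr real b"
  have p: "p > 0" and q: "q > 0" by (simp_all add: p_def q_def)
  have key: "min p q * (p + q) \<le> 2 * (p * q)"
  proof (cases "p \<le> q")
    case True
    then have "p * p \<le> p * q" using p by (simp add: mult_left_mono)
    then show ?thesis using True by (simp add: min_def algebra_simps)
  next
    case False
    then have "q * q \<le> p * q" using q by (simp add: mult_right_mono)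
    then show ?thesis using False by (simp add: min_def algebra_simps)
  qed
  have e1: "min (Rj a) (Rj b) = 6 * min p q" by (simp add: Rj_def p_def q_def min_mult_distrib_left)
  have e2: "Rj a + Rj b = 6 * (p + q)" by (simp add: Rj_def p_def q_def)
  have "2 * min (Rj a) (Rj b) * (10 * (Rj a + Rj b) / 2 powr K) = 720 * (min p q * (p + q)) / 2 powr K"
    unfolding e1 e2 by (simp add: field_simps)
  also have "\<dots> \<le> 720 * (2 * (p * q)) / 2 powr K"
    by (rule divide_right_mono) (use key in \<open>auto simp: mult.commute\<close>)
  also have "\<dots> = 1440 * 2 powr (real a + real b - K)"
    by (simp add: p_def q_def powr_add powr_diff)
  finally show ?thesis .
qed

lemma arith_c:
  "2 * min (Rj a) (Rj b) * (4 * (Rj a + Rj b) / 2 powr K + 2 * sqrt (Rj a + Rj b))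
   \<le> 12 * 2 powr (min (real a) (real b)) * (48 * 2 powr (max (real a) (real b) - K) + 7 * 2 powr (max (real a) (real b) / 2))"
proof -
  define p where "p = (2::real) powr real a"
  define q where "q = (2::real) powr real b"
  define m where "m = (2::real) powr (max (real a) (real b))"
  have p: "p > 0" and q: "q > 0" by (simp_all add: p_def q_def)
  have m: "p \<le> m" "q \<le> m" by (simp_all add: m_def p_def q_def p2_max)
  have s: "Rj a + Rj b \<le> 12 * m" using m by (simp add: Rj_def p_def[symmetric] q_def[symmetric])
  have t1: "4 * (Rj a + Rj b) / 2 powr K \<le> 48 * 2 powr (max (real a) (real b) - K)"
  proof -
    have "4 * (Rj a + Rj b) / 2 powr K \<le> 4 * (12 * m) / 2 powr K"
      by (rule divide_right_mono) (use s in auto)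
    also have "\<dots> = 48 * 2 powr (max (real a) (real b) - K)" by (simp add: m_def powr_diff)
    finally show ?thesis .
  qed
  have t2: "2 * sqrt (Rj a + Rj b) \<le> 7 * 2 powr (max (real a) (real b) / 2)"
  proof -
    have "sqrt (Rj a + Rj b) \<le> sqrt (12 * m)" using s by (rule real_sqrt_le_mono)
    also have "\<dots> = sqrt 12 * 2 powr (max (real a) (real b) / 2)" by (simp add: real_sqrt_mult m_def p2_sqrt)
    finally have "2 * sqrt (Rj a + Rj b) \<le> 2 * sqrt 12 * 2 powr (max (real a) (real b) / 2)" by simp
    also have "2 * sqrt 12 \<le> (7::real)"
    proof -
      have "sqrt 12 \<le> sqrt ((7/2)^2)" by (rule real_sqrt_le_mono) (simp add: power2_eq_square)
      then show ?thesis by simp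
    qed
    then have "2 * sqrt 12 * 2 powr (max (real a) (real b) / 2) \<le> 7 * 2 powr (max (real a) (real b) / 2)"
      by (rule mult_right_mono) simp
    finally show ?thesis .
  qed
  have "2 * min (Rj a) (Rj b) = 12 * 2 powr (min (real a) (real b))" by (simp add: min_Rj)
  moreover have "4 * (Rj a + Rj b) / 2 powr K + 2 * sqrt (Rj a + Rj b)
      \<le> 48 * 2 powr (max (real a) (real b) - K) + 7 * 2 powr (max (real a) (real b) / 2)"
    using t1 t2 by simp
  ultimately show ?thesis by (simp add: mult_left_mono)
qed



lemma Iset_ub: "s \<in> Iset k \<Longrightarrow> \<bar>s\<bar> \<le> 2 * 2 powr (real_of_int k)" using Iset_le by blast
lemma Iset_lb: "s \<in> Iset k \<Longrightarrow> 2 powr (real_of_int k) / 2 \<le> \<bar>s\<bar>" using Iset_le by blast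
lemma G_fst: "(\<xi>, \<tau>) \<in> G k R \<Longrightarrow> \<xi> \<in> Iset k" by (simp add: G_def)

lemma h38: "3/4 * x \<le> y \<Longrightarrow> p / 2 \<le> x \<Longrightarrow> 3/8 * p \<le> (y::real)" by linarith

lemma geo_app:
  assumes a: "a \<in> Iset k1" and b: "b \<in> Iset k2" and c: "a + b \<in> Iset k3"
    and k: "max k1 (max k2 k3) \<ge> min k1 (min k2 k3) + 5"
  shows "\<bar>\<bar>b\<bar> - \<bar>a\<bar>\<bar> \<ge> 3/8 * 2 powr (real_of_int k3) \<and> \<bar>\<bar>a + b\<bar> - \<bar>a\<bar>\<bar> \<ge> 3/8 * 2 powr (real_of_int k2)
     \<and> \<bar>\<bar>a + b\<bar> - \<bar>b\<bar>\<bar> \<ge> 3/8 * 2 powr (real_of_int k1)"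
proof -
  define X where "X = max \<bar>a\<bar> (max \<bar>b\<bar> \<bar>a + b\<bar>)"
  define Y where "Y = min \<bar>a\<bar> (min \<bar>b\<bar> \<bar>a + b\<bar>)"
  have pmax: "(2::real) powr (real_of_int (max k1 (max k2 k3))) = max (2 powr real_of_int k1) (max (2 powr real_of_int k2) (2 powr real_of_int k3))"
    by (simp only: of_int_max p2_max)
  have pmin: "(2::real) powr (real_of_int (min k1 (min k2 k3))) = min (2 powr real_of_int k1) (min (2 powr real_of_int k2) (2 powr real_of_int k3))"
    by (simp only: of_int_min p2_min)
  have X: "X \<ge> 2 powr (real_of_int (max k1 (max k2 k3))) / 2"
  proof -
    have "\<bar>a\<bar> \<le> X" "\<bar>b\<bar> \<le> X" "\<bar>a + b\<bar> \<le> X" unfolding X_def by (simp_all only: max.cobounded1 max.coboundedI2)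
    then have "max (2 powr real_of_int k1) (max (2 powr real_of_int k2) (2 powr real_of_int k3)) \<le> 2 * X"
      using Iset_lb[OF a] Iset_lb[OF b] Iset_lb[OF c] by (intro max.boundedI) linarith+
    then show ?thesis unfolding pmax by linarith
  qed
  have Y: "Y \<le> 2 * 2 powr (real_of_int (min k1 (min k2 k3)))"
  proof -
    have "Y \<le> \<bar>a\<bar>" "Y \<le> \<bar>b\<bar>" "Y \<le> \<bar>a + b\<bar>" unfolding Y_def by (simp_all only: min.cobounded1 min.coboundedI2)
    then have "Y / 2 \<le> min (2 powr real_of_int k1) (min (2 powr real_of_int k2) (2 powr real_of_int k3))"
      using Iset_ub[OF a] Iset_ub[OF b] Iset_ub[OF c] by (intro min.boundedI) linarith+
    then show ?thesis unfolding pmin by linarith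
  qed
  have "(2::real) powr (real_of_int (min k1 (min k2 k3)) + 5) \<le> 2 powr (real_of_int (max k1 (max k2 k3)))"
    by (rule p2_mono) (use k in linarith)
  then have "32 * 2 powr (real_of_int (min k1 (min k2 k3))) \<le> 2 powr (real_of_int (max k1 (max k2 k3)))"
    by (simp add: powr_add)
  then have "X \<ge> 8 * Y" using X Y by linarith
  then have g: "\<bar>\<bar>b\<bar> - \<bar>a\<bar>\<bar> \<ge> 3/4 * \<bar>a + b\<bar> \<and> \<bar>\<bar>a + b\<bar> - \<bar>a\<bar>\<bar> \<ge> 3/4 * \<bar>b\<bar> \<and> \<bar>\<bar>a + b\<bar> - \<bar>b\<bar>\<bar> \<ge> 3/4 * \<bar>a\<bar>"
    using geo_real[of a b "a + b", OF refl] unfolding X_def Y_def by blast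
  then have g1: "\<bar>\<bar>b\<bar> - \<bar>a\<bar>\<bar> \<ge> 3/4 * \<bar>a + b\<bar>" and g2: "\<bar>\<bar>a + b\<bar> - \<bar>a\<bar>\<bar> \<ge> 3/4 * \<bar>b\<bar>"
    and g3: "\<bar>\<bar>a + b\<bar> - \<bar>b\<bar>\<bar> \<ge> 3/4 * \<bar>a\<bar>" by auto
  have l1: "2 powr (real_of_int k1) / 2 \<le> \<bar>a\<bar>" by (rule Iset_lb[OF a])
  have l2: "2 powr (real_of_int k2) / 2 \<le> \<bar>b\<bar>" by (rule Iset_lb[OF b])
  have l3: "2 powr (real_of_int k3) / 2 \<le> \<bar>a + b\<bar>" by (rule Iset_lb[OF c])
  have "\<bar>\<bar>b\<bar> - \<bar>a\<bar>\<bar> \<ge> 3/8 * 2 powr (real_of_int k3)" by (rule h38[OF g1 l3])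
  moreover have "\<bar>\<bar>a + b\<bar> - \<bar>a\<bar>\<bar> \<ge> 3/8 * 2 powr (real_of_int k2)" by (rule h38[OF g2 l2])
  moreover have "\<bar>\<bar>a + b\<bar> - \<bar>b\<bar>\<bar> \<ge> 3/8 * 2 powr (real_of_int k1)" by (rule h38[OF g3 l1])
  ultimately show ?thesis by blast
qed

lemma g1a: "good (G k1 (Rj j1)) (G k2 (Rj j2)) (G k3 (Rj j3)) (48 * 2 powr (min (real j1) (real j2) + min (real_of_int k1) (real_of_int k2)))"
proof -
  have "good (G k1 (Rj j1)) (G k2 (Rj j2)) (G k3 (Rj j3)) (2 * min (Rj j1) (Rj j2) * (4 * 2 powr (min (real_of_int k1) (real_of_int k2))))"
  proof (rule good1)
    fix \<xi> \<tau> assume "(\<xi>, \<tau>) \<in> G k3 (Rj j3)"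
    show "emeasure lborel {s. (s \<in> Iset k1 \<and> \<xi> - s \<in> Iset k2) \<and> \<bar>phi (-\<xi>) s + (-\<tau>)\<bar> \<le> Rj j1 + Rj j2} \<le> ennreal (4 * 2 powr (min (real_of_int k1) (real_of_int k2)))"
    proof (rule gen_a)
      show "{s. (s \<in> Iset k1 \<and> \<xi> - s \<in> Iset k2) \<and> \<bar>phi (-\<xi>) s + (-\<tau>)\<bar> \<le> Rj j1 + Rj j2} \<subseteq> {s. \<bar>s - 0\<bar> \<le> 2 * 2 powr (real_of_int k1)}"
        by (auto dest!: Iset_ub)
      show "{s. (s \<in> Iset k1 \<and> \<xi> - s \<in> Iset k2) \<and> \<bar>phi (-\<xi>) s + (-\<tau>)\<bar> \<le> Rj j1 + Rj j2} \<subseteq> {s. \<bar>s - \<xi>\<bar> \<le> 2 * 2 powr (real_of_int k2)}"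
        by (auto dest!: Iset_ub simp: abs_minus_commute)
    qed
  qed (simp_all add: Rj_pos less_imp_le)
  then show ?thesis by (simp only: arith_a)
qed

lemma g1c: "good (G k1 (Rj j1)) (G k2 (Rj j2)) (G k3 (Rj j3)) (12 * 2 powr (min (real j1) (real j2)) * (48 * 2 powr (max (real j1) (real j2) - real_of_int k3) + 7 * 2 powr (max (real j1) (real j2) / 2)))"
proof -
  have "good (G k1 (Rj j1)) (G k2 (Rj j2)) (G k3 (Rj j3)) (2 * min (Rj j1) (Rj j2) * (4 * (Rj j1 + Rj j2) / 2 powr (real_of_int k3) + 2 * sqrt (Rj j1 + Rj j2)))"
  proof (rule good1)
    fix \<xi> \<tau> assume x: "(\<xi>, \<tau>) \<in> G k3 (Rj j3)"
    show "emeasure lborel {s. (s \<in> Iset k1 \<and> \<xi> - s \<in> Iset k2) \<and> \<bar>phi (-\<xi>) s + (-\<tau>)\<bar> \<le> Rj j1 + Rj j2} \<le> ennreal (4 * (Rj j1 + Rj j2) / 2 powr (real_of_int k3) + 2 * sqrt (Rj j1 + Rj j2))"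
    proof (rule gen_c)
      show "{s. (s \<in> Iset k1 \<and> \<xi> - s \<in> Iset k2) \<and> \<bar>phi (-\<xi>) s + (-\<tau>)\<bar> \<le> Rj j1 + Rj j2} \<subseteq> {s. \<bar>phi (-\<xi>) s + (-\<tau>)\<bar> \<le> Rj j1 + Rj j2}" by auto
      show "\<bar>-\<xi>\<bar> \<ge> 2 powr (real_of_int k3) / 2" using Iset_lb[OF G_fst[OF x]] by simp
    qed (simp add: Rj_pos less_imp_le add_nonneg_nonneg)
  qed (simp_all add: Rj_pos less_imp_le add_nonneg_nonneg)
  then show ?thesis by (rule good_mono) (rule arith_c)
qed

lemma g1b:
  assumes kk: "max k1 (max k2 k3) \<ge> min k1 (min k2 k3) + 5"
  shows "good (G k1 (Rj j1)) (G k2 (Rj j2)) (G k3 (Rj j3)) (1440 * 2 powr (real j1 + real j2 - real_of_int k3))"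
proof -
  have "good (G k1 (Rj j1)) (G k2 (Rj j2)) (G k3 (Rj j3)) (2 * min (Rj j1) (Rj j2) * (10 * (Rj j1 + Rj j2) / 2 powr (real_of_int k3)))"
  proof (rule good1)
    fix \<xi> \<tau> assume x: "(\<xi>, \<tau>) \<in> G k3 (Rj j3)"
    show "emeasure lborel {s. (s \<in> Iset k1 \<and> \<xi> - s \<in> Iset k2) \<and> \<bar>phi (-\<xi>) s + (-\<tau>)\<bar> \<le> Rj j1 + Rj j2} \<le> ennreal (10 * (Rj j1 + Rj j2) / 2 powr (real_of_int k3))"
    proof (rule gen_b)
      show "{s. (s \<in> Iset k1 \<and> \<xi> - s \<in> Iset k2) \<and> \<bar>phi (-\<xi>) s + (-\<tau>)\<bar> \<le> Rj j1 + Rj j2} \<subseteq> {s. \<bar>phi (-\<xi>) s + (-\<tau>)\<bar> \<le> Rj j1 + Rj j2 \<and> 3/8 * 2 powr (real_of_int k3) \<le> \<bar>\<bar>s + -\<xi>\<bar> - \<bar>s\<bar>\<bar>}"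
      proof
      fix s assume s: "s \<in> {s. (s \<in> Iset k1 \<and> \<xi> - s \<in> Iset k2) \<and> \<bar>phi (-\<xi>) s + (-\<tau>)\<bar> \<le> Rj j1 + Rj j2}"
      have "\<bar>\<bar>\<xi> - s\<bar> - \<bar>s\<bar>\<bar> \<ge> 3/8 * 2 powr (real_of_int k3)"
        using geo_app[of s k1 "\<xi> - s" k2 k3] s G_fst[OF x] kk by auto
      then show "s \<in> {s. \<bar>phi (-\<xi>) s + (-\<tau>)\<bar> \<le> Rj j1 + Rj j2 \<and> 3/8 * 2 powr (real_of_int k3) \<le> \<bar>\<bar>s + -\<xi>\<bar> - \<bar>s\<bar>\<bar>}"
        using s by (simp add: abs_minus_commute)
      qed
      show "\<bar>-\<xi>\<bar> \<ge> 2 powr (real_of_int k3) / 2" using Iset_lb[OF G_fst[OF x]] by simp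
    qed (simp add: Rj_pos less_imp_le add_nonneg_nonneg)
  qed (simp_all add: Rj_pos less_imp_le add_nonneg_nonneg divide_nonneg_pos)
  then show ?thesis by (rule good_mono) (rule arith_b)
qed

lemma g2a: "good (G k1 (Rj j1)) (G k2 (Rj j2)) (G k3 (Rj j3)) (48 * 2 powr (min (real j1) (real j3) + min (real_of_int k1) (real_of_int k3)))"
proof -
  have "good (G k1 (Rj j1)) (G k2 (Rj j2)) (G k3 (Rj j3)) (2 * min (Rj j1) (Rj j3) * (4 * 2 powr (min (real_of_int k1) (real_of_int k3))))"
  proof (rule good2)
    fix \<xi> \<tau> assume "(\<xi>, \<tau>) \<in> G k2 (Rj j2)"
    show "emeasure lborel {s. (s \<in> Iset k1 \<and> \<xi> + s \<in> Iset k3) \<and> \<bar>phi \<xi> s + \<tau>\<bar> \<le> Rj j1 + Rj j3} \<le> ennreal (4 * 2 powr (min (real_of_int k1) (real_of_int k3)))"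
    proof (rule gen_a)
      show "{s. (s \<in> Iset k1 \<and> \<xi> + s \<in> Iset k3) \<and> \<bar>phi \<xi> s + \<tau>\<bar> \<le> Rj j1 + Rj j3} \<subseteq> {s. \<bar>s - 0\<bar> \<le> 2 * 2 powr (real_of_int k1)}"
        by (auto dest!: Iset_ub)
      show "{s. (s \<in> Iset k1 \<and> \<xi> + s \<in> Iset k3) \<and> \<bar>phi \<xi> s + \<tau>\<bar> \<le> Rj j1 + Rj j3} \<subseteq> {s. \<bar>s - (- \<xi>)\<bar> \<le> 2 * 2 powr (real_of_int k3)}"
        by (auto dest!: Iset_ub simp: add.commute)
    qed
  qed (simp_all add: Rj_pos less_imp_le)
  then show ?thesis by (simp only: arith_a)
qed

lemma g2c: "good (G k1 (Rj j1)) (G k2 (Rj j2)) (G k3 (Rj j3)) (12 * 2 powr (min (real j1) (real j3)) * (48 * 2 powr (max (real j1) (real j3) - real_of_int k2) + 7 * 2 powr (max (real j1) (real j3) / 2)))"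
proof -
  have "good (G k1 (Rj j1)) (G k2 (Rj j2)) (G k3 (Rj j3)) (2 * min (Rj j1) (Rj j3) * (4 * (Rj j1 + Rj j3) / 2 powr (real_of_int k2) + 2 * sqrt (Rj j1 + Rj j3)))"
  proof (rule good2)
    fix \<xi> \<tau> assume x: "(\<xi>, \<tau>) \<in> G k2 (Rj j2)"
    show "emeasure lborel {s. (s \<in> Iset k1 \<and> \<xi> + s \<in> Iset k3) \<and> \<bar>phi \<xi> s + \<tau>\<bar> \<le> Rj j1 + Rj j3} \<le> ennreal (4 * (Rj j1 + Rj j3) / 2 powr (real_of_int k2) + 2 * sqrt (Rj j1 + Rj j3))"
    proof (rule gen_c)
      show "{s. (s \<in> Iset k1 \<and> \<xi> + s \<in> Iset k3) \<and> \<bar>phi \<xi> s + \<tau>\<bar> \<le> Rj j1 + Rj j3} \<subseteq> {s. \<bar>phi (\<xi>) s + \<tau>\<bar> \<le> Rj j1 + Rj j3}" by auto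
      show "\<bar>\<xi>\<bar> \<ge> 2 powr (real_of_int k2) / 2" using Iset_lb[OF G_fst[OF x]] by simp
    qed (simp add: Rj_pos less_imp_le add_nonneg_nonneg)
  qed (simp_all add: Rj_pos less_imp_le add_nonneg_nonneg)
  then show ?thesis by (rule good_mono) (rule arith_c)
qed

lemma g2b:
  assumes kk: "max k1 (max k2 k3) \<ge> min k1 (min k2 k3) + 5"
  shows "good (G k1 (Rj j1)) (G k2 (Rj j2)) (G k3 (Rj j3)) (1440 * 2 powr (real j1 + real j3 - real_of_int k2))"
proof -
  have "good (G k1 (Rj j1)) (G k2 (Rj j2)) (G k3 (Rj j3)) (2 * min (Rj j1) (Rj j3) * (10 * (Rj j1 + Rj j3) / 2 powr (real_of_int k2)))"
  proof (rule good2)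
    fix \<xi> \<tau> assume x: "(\<xi>, \<tau>) \<in> G k2 (Rj j2)"
    show "emeasure lborel {s. (s \<in> Iset k1 \<and> \<xi> + s \<in> Iset k3) \<and> \<bar>phi \<xi> s + \<tau>\<bar> \<le> Rj j1 + Rj j3} \<le> ennreal (10 * (Rj j1 + Rj j3) / 2 powr (real_of_int k2))"
    proof (rule gen_b)
      show "{s. (s \<in> Iset k1 \<and> \<xi> + s \<in> Iset k3) \<and> \<bar>phi \<xi> s + \<tau>\<bar> \<le> Rj j1 + Rj j3} \<subseteq> {s. \<bar>phi (\<xi>) s + \<tau>\<bar> \<le> Rj j1 + Rj j3 \<and> 3/8 * 2 powr (real_of_int k2) \<le> \<bar>\<bar>s + \<xi>\<bar> - \<bar>s\<bar>\<bar>}"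
      proof
      fix s assume s: "s \<in> {s. (s \<in> Iset k1 \<and> \<xi> + s \<in> Iset k3) \<and> \<bar>phi \<xi> s + \<tau>\<bar> \<le> Rj j1 + Rj j3}"
      have "\<bar>\<bar>s + \<xi>\<bar> - \<bar>s\<bar>\<bar> \<ge> 3/8 * 2 powr (real_of_int k2)"
        using geo_app[of s k1 "\<xi>" k2 k3] s G_fst[OF x] kk by (auto simp: add.commute)
      then show "s \<in> {s. \<bar>phi (\<xi>) s + \<tau>\<bar> \<le> Rj j1 + Rj j3 \<and> 3/8 * 2 powr (real_of_int k2) \<le> \<bar>\<bar>s + \<xi>\<bar> - \<bar>s\<bar>\<bar>}"
        using s by simp
      qed
      show "\<bar>\<xi>\<bar> \<ge> 2 powr (real_of_int k2) / 2" using Iset_lb[OF G_fst[OF x]] by simp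
    qed (simp add: Rj_pos less_imp_le add_nonneg_nonneg)
  qed (simp_all add: Rj_pos less_imp_le add_nonneg_nonneg divide_nonneg_pos)
  then show ?thesis by (rule good_mono) (rule arith_b)
qed

lemma g3a: "good (G k1 (Rj j1)) (G k2 (Rj j2)) (G k3 (Rj j3)) (48 * 2 powr (min (real j3) (real j2) + min (real_of_int k3) (real_of_int k2)))"
proof -
  have "good (G k1 (Rj j1)) (G k2 (Rj j2)) (G k3 (Rj j3)) (2 * min (Rj j3) (Rj j2) * (4 * 2 powr (min (real_of_int k3) (real_of_int k2))))"
  proof (rule good3)
    fix \<xi> \<tau> assume "(\<xi>, \<tau>) \<in> G k1 (Rj j1)"
    show "emeasure lborel {s. (s \<in> Iset k3 \<and> s - \<xi> \<in> Iset k2) \<and> \<bar>phi (-\<xi>) s + (-\<tau>)\<bar> \<le> Rj j3 + Rj j2} \<le> ennreal (4 * 2 powr (min (real_of_int k3) (real_of_int k2)))"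
    proof (rule gen_a)
      show "{s. (s \<in> Iset k3 \<and> s - \<xi> \<in> Iset k2) \<and> \<bar>phi (-\<xi>) s + (-\<tau>)\<bar> \<le> Rj j3 + Rj j2} \<subseteq> {s. \<bar>s - 0\<bar> \<le> 2 * 2 powr (real_of_int k3)}"
        by (auto dest!: Iset_ub)
      show "{s. (s \<in> Iset k3 \<and> s - \<xi> \<in> Iset k2) \<and> \<bar>phi (-\<xi>) s + (-\<tau>)\<bar> \<le> Rj j3 + Rj j2} \<subseteq> {s. \<bar>s - \<xi>\<bar> \<le> 2 * 2 powr (real_of_int k2)}"
        by (auto dest!: Iset_ub)
    qed
  qed (simp_all add: Rj_pos less_imp_le)
  then show ?thesis by (simp only: arith_a)
qed

lemma g3c: "good (G k1 (Rj j1)) (G k2 (Rj j2)) (G k3 (Rj j3)) (12 * 2 powr (min (real j3) (real j2)) * (48 * 2 powr (max (real j3) (real j2) - real_of_int k1) + 7 * 2 powr (max (real j3) (real j2) / 2)))"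
proof -
  have "good (G k1 (Rj j1)) (G k2 (Rj j2)) (G k3 (Rj j3)) (2 * min (Rj j3) (Rj j2) * (4 * (Rj j3 + Rj j2) / 2 powr (real_of_int k1) + 2 * sqrt (Rj j3 + Rj j2)))"
  proof (rule good3)
    fix \<xi> \<tau> assume x: "(\<xi>, \<tau>) \<in> G k1 (Rj j1)"
    show "emeasure lborel {s. (s \<in> Iset k3 \<and> s - \<xi> \<in> Iset k2) \<and> \<bar>phi (-\<xi>) s + (-\<tau>)\<bar> \<le> Rj j3 + Rj j2} \<le> ennreal (4 * (Rj j3 + Rj j2) / 2 powr (real_of_int k1) + 2 * sqrt (Rj j3 + Rj j2))"
    proof (rule gen_c)
      show "{s. (s \<in> Iset k3 \<and> s - \<xi> \<in> Iset k2) \<and> \<bar>phi (-\<xi>) s + (-\<tau>)\<bar> \<le> Rj j3 + Rj j2} \<subseteq> {s. \<bar>phi (-\<xi>) s + (-\<tau>)\<bar> \<le> Rj j3 + Rj j2}" by auto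
      show "\<bar>-\<xi>\<bar> \<ge> 2 powr (real_of_int k1) / 2" using Iset_lb[OF G_fst[OF x]] by simp
    qed (simp add: Rj_pos less_imp_le add_nonneg_nonneg)
  qed (simp_all add: Rj_pos less_imp_le add_nonneg_nonneg)
  then show ?thesis by (rule good_mono) (rule arith_c)
qed

lemma g3b:
  assumes kk: "max k1 (max k2 k3) \<ge> min k1 (min k2 k3) + 5"
  shows "good (G k1 (Rj j1)) (G k2 (Rj j2)) (G k3 (Rj j3)) (1440 * 2 powr (real j3 + real j2 - real_of_int k1))"
proof -
  have "good (G k1 (Rj j1)) (G k2 (Rj j2)) (G k3 (Rj j3)) (2 * min (Rj j3) (Rj j2) * (10 * (Rj j3 + Rj j2) / 2 powr (real_of_int k1)))"
  proof (rule good3)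
    fix \<xi> \<tau> assume x: "(\<xi>, \<tau>) \<in> G k1 (Rj j1)"
    show "emeasure lborel {s. (s \<in> Iset k3 \<and> s - \<xi> \<in> Iset k2) \<and> \<bar>phi (-\<xi>) s + (-\<tau>)\<bar> \<le> Rj j3 + Rj j2} \<le> ennreal (10 * (Rj j3 + Rj j2) / 2 powr (real_of_int k1))"
    proof (rule gen_b)
      show "{s. (s \<in> Iset k3 \<and> s - \<xi> \<in> Iset k2) \<and> \<bar>phi (-\<xi>) s + (-\<tau>)\<bar> \<le> Rj j3 + Rj j2} \<subseteq> {s. \<bar>phi (-\<xi>) s + (-\<tau>)\<bar> \<le> Rj j3 + Rj j2 \<and> 3/8 * 2 powr (real_of_int k1) \<le> \<bar>\<bar>s + -\<xi>\<bar> - \<bar>s\<bar>\<bar>}"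
      proof
      fix s assume s: "s \<in> {s. (s \<in> Iset k3 \<and> s - \<xi> \<in> Iset k2) \<and> \<bar>phi (-\<xi>) s + (-\<tau>)\<bar> \<le> Rj j3 + Rj j2}"
      have "\<bar>\<bar>\<xi> + (s - \<xi>)\<bar> - \<bar>s - \<xi>\<bar>\<bar> \<ge> 3/8 * 2 powr (real_of_int k1)"
        using geo_app[of "\<xi>" k1 "s - \<xi>" k2 k3] s G_fst[OF x] kk by auto
      then show "s \<in> {s. \<bar>phi (-\<xi>) s + (-\<tau>)\<bar> \<le> Rj j3 + Rj j2 \<and> 3/8 * 2 powr (real_of_int k1) \<le> \<bar>\<bar>s + -\<xi>\<bar> - \<bar>s\<bar>\<bar>}"
        using s by (simp add: abs_minus_commute)
      qed
      show "\<bar>-\<xi>\<bar> \<ge> 2 powr (real_of_int k1) / 2" using Iset_lb[OF G_fst[OF x]] by simp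
    qed (simp add: Rj_pos less_imp_le add_nonneg_nonneg)
  qed (simp_all add: Rj_pos less_imp_le add_nonneg_nonneg divide_nonneg_pos)
  then show ?thesis by (rule good_mono) (rule arith_b)
qed



lemma Itil_bound:
  assumes "x \<in> Itil j"
  shows "\<bar>x\<bar> \<le> 2 * 2 powr real j \<and> (j \<ge> 1 \<longrightarrow> 2 powr real j / 2 \<le> \<bar>x\<bar>)"
proof (cases "j = 0")
  case True then show ?thesis using assms by (simp add: Itil_def abs_le_iff)
next
  case False
  then have "x \<in> Iset (int j)" using assms by (simp add: Itil_def)
  from Iset_le[OF this] show ?thesis by simp
qed

lemma omega_abs: "\<bar>omega x\<bar> = \<bar>x\<bar> * \<bar>x\<bar>"
  by (simp add: omega_def abs_mult)

lemma Dset_mod: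
  assumes "(\<xi>, \<tau>) \<in> Dset k j"
  shows "\<xi> \<in> Iset k \<and> \<bar>\<tau> - omega \<xi>\<bar> \<le> 2 * 2 powr real j + 4 \<and> (j \<ge> 1 \<longrightarrow> 2 powr real j / 2 - 4 \<le> \<bar>\<tau> - omega \<xi>\<bar>)"
proof (cases "k \<ge> 1")
  case True
  then have "\<xi> \<in> Iset k" "\<tau> - omega \<xi> \<in> Itil j" using assms by (auto simp: Dset_def)
  with Itil_bound[of "\<tau> - omega \<xi>" j] show ?thesis by auto
next
  case False
  then have xi: "\<xi> \<in> Iset k" and t: "\<tau> \<in> Itil j" using assms by (auto simp: Dset_def)
  have "(2::real) powr real_of_int k \<le> 2 powr 0" by (rule p2_mono) (use False in simp)
  then have "\<bar>\<xi>\<bar> \<le> 2" using Iset_ub[OF xi] by simp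
  then have "\<bar>\<xi>\<bar> * \<bar>\<xi>\<bar> \<le> 2 * 2" by (intro mult_mono) auto
  then have om: "\<bar>omega \<xi>\<bar> \<le> 4" by (simp add: omega_abs)
  have "\<bar>\<tau>\<bar> \<le> 2 * 2 powr real j \<and> (j \<ge> 1 \<longrightarrow> 2 powr real j / 2 \<le> \<bar>\<tau>\<bar>)" by (rule Itil_bound[OF t])
  then show ?thesis using xi om by (auto simp: abs_le_iff)
qed

lemma Dset_G: "Dset k j \<subseteq> G k (Rj j)"
proof
  fix x assume x: "x \<in> Dset k j"
  obtain \<xi> \<tau> where xe: "x = (\<xi>, \<tau>)" by (cases x)
  have m: "\<xi> \<in> Iset k" "\<bar>\<tau> - omega \<xi>\<bar> \<le> 2 * 2 powr real j + 4"
    using Dset_mod[of \<xi> \<tau> k j] x xe by auto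
  have "(2::real) powr 0 \<le> 2 powr real j" by (rule p2_mono) simp
  then have "2 * 2 powr real j + 4 \<le> Rj j" by (simp add: Rj_def)
  then show "x \<in> G k (Rj j)" using m xe by (simp add: G_def)
qed


lemma dk_int:
  fixes k1 k2 k3 :: int
  assumes "max k1 (max k2 k3) > med3 k1 k2 k3 + 2"
  shows "(k3 \<ge> k1 + 3 \<and> k3 \<ge> k2 + 3) \<or> (k1 \<ge> k2 + 3 \<and> k1 \<ge> k3 + 3) \<or> (k2 \<ge> k1 + 3 \<and> k2 \<ge> k3 + 3)"
  using assms unfolding med3_def by (auto simp: max_def min_def split: if_splits)

lemma kt_int:
  fixes k1 k2 k3 :: int
  shows "k1 + k2 \<ge> min k1 (min k2 k3) + med3 k1 k2 k3 \<and> k1 + k3 \<ge> min k1 (min k2 k3) + med3 k1 k2 k3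
    \<and> k2 + k3 \<ge> min k1 (min k2 k3) + med3 k1 k2 k3
    \<and> (k1 + k2 \<le> min k1 (min k2 k3) + med3 k1 k2 k3 \<or> k1 + k3 \<le> min k1 (min k2 k3) + med3 k1 k2 k3
       \<or> k2 + k3 \<le> min k1 (min k2 k3) + med3 k1 k2 k3)"
  unfolding med3_def by (auto simp: max_def min_def)

lemma dk:
  assumes a: "a \<in> Iset k1" and b: "b \<in> Iset k2" and c: "a + b \<in> Iset k3"
    and k: "max k1 (max k2 k3) > med3 k1 k2 k3 + 2"
  shows "a \<in> {2 * 2 powr real_of_int k1, - (2 * 2 powr real_of_int k1)} \<or> b \<in> {2 * 2 powr real_of_int k2, - (2 * 2 powr real_of_int k2)}"
proof -
  define P1 where "P1 = (2::real) powr real_of_int k1"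
  define P2 where "P2 = (2::real) powr real_of_int k2"
  define P3 where "P3 = (2::real) powr real_of_int k3"
  have la: "P1 / 2 \<le> \<bar>a\<bar>" and ua: "\<bar>a\<bar> \<le> 2 * P1" using Iset_le[OF a] by (simp_all add: P1_def)
  have lb: "P2 / 2 \<le> \<bar>b\<bar>" and ub: "\<bar>b\<bar> \<le> 2 * P2" using Iset_le[OF b] by (simp_all add: P2_def)
  have lc: "P3 / 2 \<le> \<bar>a + b\<bar>" and uc: "\<bar>a + b\<bar> \<le> 2 * P3" using Iset_le[OF c] by (simp_all add: P3_def)
  have tri: "\<bar>a + b\<bar> \<le> \<bar>a\<bar> + \<bar>b\<bar>" "\<bar>a\<bar> \<le> \<bar>b\<bar> + \<bar>a + b\<bar>" "\<bar>b\<bar> \<le> \<bar>a\<bar> + \<bar>a + b\<bar>" by arith+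
  have mono3: "8 * (2::real) powr real_of_int x \<le> 2 powr real_of_int y" if "y \<ge> x + 3" for x y :: int
  proof -
    have "(2::real) powr (real_of_int x + 3) \<le> 2 powr real_of_int y" by (rule p2_mono) (use that in linarith)
    then show ?thesis by (simp add: powr_add)
  qed
  from dk_int[OF k] consider "k3 \<ge> k1 + 3" "k3 \<ge> k2 + 3" | "k1 \<ge> k2 + 3" "k1 \<ge> k3 + 3" | "k2 \<ge> k1 + 3" "k2 \<ge> k3 + 3"
    by blast
  then show ?thesis
  proof cases
    case 1
    then have "8 * P1 \<le> P3" "8 * P2 \<le> P3" using mono3 by (simp_all add: P1_def P2_def P3_def)
    then have "\<bar>a\<bar> = 2 * P1" using la ua lb ub lc uc tri by linarith
    then show ?thesis by (auto simp: P1_def abs_if split: if_splits)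
  next
    case 2
    then have "8 * P2 \<le> P1" "8 * P3 \<le> P1" using mono3 by (simp_all add: P1_def P2_def P3_def)
    then have "\<bar>b\<bar> = 2 * P2" using la ua lb ub lc uc tri by linarith
    then show ?thesis by (auto simp: P2_def abs_if split: if_splits)
  next
    case 3
    then have "8 * P1 \<le> P2" "8 * P3 \<le> P2" using mono3 by (simp_all add: P1_def P2_def P3_def)
    then have "\<bar>a\<bar> = 2 * P1" using la ua lb ub lc uc tri by linarith
    then show ?thesis by (auto simp: P1_def abs_if split: if_splits)
  qed
qed

lemma prod_lb: "P / 2 \<le> \<bar>x\<bar> \<Longrightarrow> Q / 2 \<le> \<bar>y\<bar> \<Longrightarrow> P \<ge> 0 \<Longrightarrow> Q \<ge> 0 \<Longrightarrow> P * Q / 4 \<le> \<bar>x\<bar> * \<bar>y::real\<bar>"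
proof -
  assume h: "P / 2 \<le> \<bar>x\<bar>" "Q / 2 \<le> \<bar>y\<bar>" "P \<ge> 0" "Q \<ge> 0"
  have "(P / 2) * (Q / 2) \<le> \<bar>x\<bar> * \<bar>y\<bar>" by (rule mult_mono) (use h in auto)
  then show ?thesis by simp
qed

lemma prod_ub: "\<bar>x\<bar> \<le> 2 * P \<Longrightarrow> \<bar>y\<bar> \<le> 2 * Q \<Longrightarrow> \<bar>x\<bar> * \<bar>y::real\<bar> \<le> 4 * (P * Q)"
proof -
  assume h: "\<bar>x\<bar> \<le> 2 * P" "\<bar>y\<bar> \<le> 2 * Q"
  have "\<bar>x\<bar> * \<bar>y\<bar> \<le> (2 * P) * (2 * Q)" by (rule mult_mono) (use h in auto)
  then show ?thesis by simp
qed

lemma res_bounds: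
  assumes a: "a \<in> Iset k1" and b: "b \<in> Iset k2" and c: "a + b \<in> Iset k3"
  shows "2 powr real_of_int (min k1 (min k2 k3) + med3 k1 k2 k3) / 2 \<le> \<bar>omega a + omega b - omega (a + b)\<bar>
     \<and> \<bar>omega a + omega b - omega (a + b)\<bar> \<le> 8 * 2 powr real_of_int (min k1 (min k2 k3) + med3 k1 k2 k3)"
proof -
  define kt where "kt = min k1 (min k2 k3) + med3 k1 k2 k3"
  define T where "T = (2::real) powr real_of_int kt"
  define P1 where "P1 = (2::real) powr real_of_int k1"
  define P2 where "P2 = (2::real) powr real_of_int k2"
  define P3 where "P3 = (2::real) powr real_of_int k3"
  have la: "P1 / 2 \<le> \<bar>a\<bar>" and ua: "\<bar>a\<bar> \<le> 2 * P1" using Iset_le[OF a] by (simp_all add: P1_def)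
  have lb: "P2 / 2 \<le> \<bar>b\<bar>" and ub: "\<bar>b\<bar> \<le> 2 * P2" using Iset_le[OF b] by (simp_all add: P2_def)
  have lc: "P3 / 2 \<le> \<bar>a + b\<bar>" and uc: "\<bar>a + b\<bar> \<le> 2 * P3" using Iset_le[OF c] by (simp_all add: P3_def)
  have pp: "P1 * P2 = 2 powr real_of_int (k1 + k2)" "P1 * P3 = 2 powr real_of_int (k1 + k3)" "P2 * P3 = 2 powr real_of_int (k2 + k3)"
    by (simp_all add: P1_def P2_def P3_def powr_add)
  note kt = kt_int[of k1 k2 k3, folded kt_def]
  have ge: "T \<le> P1 * P2" "T \<le> P1 * P3" "T \<le> P2 * P3"
    unfolding pp T_def by (rule p2_mono; use kt in simp)+
  have m1: "T / 4 \<le> \<bar>a\<bar> * \<bar>b\<bar>" using prod_lb[OF la lb] ge(1) by (simp add: P1_def P2_def)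
  have m2: "T / 4 \<le> \<bar>a\<bar> * \<bar>a + b\<bar>" using prod_lb[OF la lc] ge(2) by (simp add: P1_def P3_def)
  have m3: "T / 4 \<le> \<bar>b\<bar> * \<bar>a + b\<bar>" using prod_lb[OF lb lc] ge(3) by (simp add: P2_def P3_def)
  have u1: "\<bar>a\<bar> * \<bar>b\<bar> \<le> 4 * (P1 * P2)" by (rule prod_ub[OF ua ub])
  have u2: "\<bar>a\<bar> * \<bar>a + b\<bar> \<le> 4 * (P1 * P3)" by (rule prod_ub[OF ua uc])
  have u3: "\<bar>b\<bar> * \<bar>a + b\<bar> \<le> 4 * (P2 * P3)" by (rule prod_ub[OF ub uc])
  have "P1 * P2 \<le> T \<or> P1 * P3 \<le> T \<or> P2 * P3 \<le> T"
    using kt unfolding pp T_def by (auto intro: p2_mono)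
  then have up: "min (\<bar>a\<bar> * \<bar>b\<bar>) (min (\<bar>a\<bar> * \<bar>a + b\<bar>) (\<bar>b\<bar> * \<bar>a + b\<bar>)) \<le> 4 * T"
    using u1 u2 u3 by (auto simp: min_le_iff_disj)
  have lo: "T / 4 \<le> min (\<bar>a\<bar> * \<bar>b\<bar>) (min (\<bar>a\<bar> * \<bar>a + b\<bar>) (\<bar>b\<bar> * \<bar>a + b\<bar>))"
    using m1 m2 m3 by simp
  show ?thesis unfolding res_eq kt_def[symmetric] T_def[symmetric] using up lo by linarith
qed


lemma med_nat:
  fixes j1 j2 j3 :: nat
  shows "(max j1 (max j2 j3) = j1 \<and> j2 \<le> med3 j1 j2 j3 \<and> j3 \<le> med3 j1 j2 j3)
    \<or> (max j1 (max j2 j3) = j2 \<and> j1 \<le> med3 j1 j2 j3 \<and> j3 \<le> med3 j1 j2 j3)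
    \<or> (max j1 (max j2 j3) = j3 \<and> j1 \<le> med3 j1 j2 j3 \<and> j2 \<le> med3 j1 j2 j3)"
  unfolding med3_def by (auto simp: max_def min_def)

lemma dj:
  fixes x y :: pt
  assumes y: "y \<in> Dset k1 j1" and z: "x - y \<in> Dset k2 j2" and x: "x \<in> Dset k3 j3"
    and cs: "int (max j1 (max j2 j3)) < min k1 (min k2 k3) + med3 k1 k2 k3 - 8 \<or>
      (int (max j1 (max j2 j3)) > min k1 (min k2 k3) + med3 k1 k2 k3 + 8 \<and> max j1 (max j2 j3) - med3 j1 j2 j3 > 10)"
  shows False
proof -
  obtain \<xi>1 \<tau>1 where ye: "y = (\<xi>1, \<tau>1)" by (cases y)
  obtain \<xi>3 \<tau>3 where xe: "x = (\<xi>3, \<tau>3)" by (cases x)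
  define \<xi>2 where "\<xi>2 = \<xi>3 - \<xi>1"
  define \<tau>2 where "\<tau>2 = \<tau>3 - \<tau>1"
  have z': "(\<xi>2, \<tau>2) \<in> Dset k2 j2" using z by (simp add: xe ye \<xi>2_def \<tau>2_def)
  define kt where "kt = min k1 (min k2 k3) + med3 k1 k2 k3"
  define jm where "jm = max j1 (max j2 j3)"
  define jd where "jd = med3 j1 j2 j3"
  define Q where "Q = (2::real) powr real jm"
  define T where "T = (2::real) powr real_of_int kt"
  define Dm where "Dm = (2::real) powr real jd"
  define P1 where "P1 = (2::real) powr real j1"
  define P2 where "P2 = (2::real) powr real j2"
  define P3 where "P3 = (2::real) powr real j3"
  define m1 where "m1 = \<tau>1 - omega \<xi>1"
  define m2 where "m2 = \<tau>2 - omega \<xi>2"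
  define m3 where "m3 = \<tau>3 - omega \<xi>3"
  define r where "r = omega \<xi>1 + omega \<xi>2 - omega (\<xi>1 + \<xi>2)"
  have D1: "\<xi>1 \<in> Iset k1" "\<bar>m1\<bar> \<le> 2 * P1 + 4" "j1 \<ge> 1 \<longrightarrow> P1 / 2 - 4 \<le> \<bar>m1\<bar>"
    using Dset_mod[of \<xi>1 \<tau>1 k1 j1] y ye by (simp_all add: m1_def P1_def)
  have D2: "\<xi>2 \<in> Iset k2" "\<bar>m2\<bar> \<le> 2 * P2 + 4" "j2 \<ge> 1 \<longrightarrow> P2 / 2 - 4 \<le> \<bar>m2\<bar>"
    using Dset_mod[of \<xi>2 \<tau>2 k2 j2] z' by (simp_all add: m2_def P2_def)
  have D3: "\<xi>3 \<in> Iset k3" "\<bar>m3\<bar> \<le> 2 * P3 + 4" "j3 \<ge> 1 \<longrightarrow> P3 / 2 - 4 \<le> \<bar>m3\<bar>"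
    using Dset_mod[of \<xi>3 \<tau>3 k3 j3] x xe by (simp_all add: m3_def P3_def)
  have s3: "\<xi>1 + \<xi>2 = \<xi>3" by (simp add: \<xi>2_def)
  have rb: "T / 2 \<le> \<bar>r\<bar>" "\<bar>r\<bar> \<le> 8 * T"
    using res_bounds[OF D1(1) D2(1)] D3(1) s3 by (simp_all add: r_def T_def kt_def)
  have rid: "m3 = m1 + m2 + r" by (simp add: m1_def m2_def m3_def r_def s3 \<tau>2_def)
  have PQ: "P1 \<le> Q" "P2 \<le> Q" "P3 \<le> Q" unfolding P1_def P2_def P3_def Q_def jm_def
    by (rule p2_mono; simp)+
  have Q1: "1 \<le> Q" unfolding Q_def using p2_mono[of 0 "real jm"] by simp
  from cs consider "real jm + 9 \<le> real_of_int kt" | "real_of_int kt + 9 \<le> real jm" "real jd + 11 \<le> real jm"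
    unfolding jm_def jd_def kt_def by linarith
  then show False
  proof cases
    case 1
    have "(2::real) powr (real jm + 9) \<le> T" unfolding T_def by (rule p2_mono) (use 1 in simp)
    then have "512 * Q \<le> T" by (simp add: Q_def powr_add)
    then show False using rb rid D1(2) D2(2) D3(2) PQ Q1 by linarith
  next
    case 2
    have "T \<le> (2::real) powr (real jm - 9)" unfolding T_def by (rule p2_mono) (use 2 in simp)
    then have TQ: "512 * T \<le> Q" by (simp add: Q_def powr_diff)
    have "Dm \<le> (2::real) powr (real jm - 11)" unfolding Dm_def by (rule p2_mono) (use 2 in simp)
    then have DQ: "2048 * Dm \<le> Q" by (simp add: Q_def powr_diff)
    have "(2::real) powr 11 \<le> Q" unfolding Q_def by (rule p2_mono) (use 2 in simp)
    then have Qb: "2048 \<le> Q" by simp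
    have jm1: "jm \<ge> 1" using 2 by linarith
    have mono_d: "P \<le> Dm" if "j \<le> jd" "P = (2::real) powr real j" for j P
      using that unfolding Dm_def by (simp add: p2_mono)
    from med_nat[of j1 j2 j3, folded jm_def jd_def] show False
    proof (elim disjE conjE)
      assume "jm = j1" "j2 \<le> jd" "j3 \<le> jd"
      then have "P1 = Q" "P2 \<le> Dm" "P3 \<le> Dm" using mono_d by (auto simp: P1_def P2_def P3_def Q_def)
      moreover have "P1 / 2 - 4 \<le> \<bar>m1\<bar>" using D1(3) jm1 \<open>jm = j1\<close> by simp
      ultimately show False using rb rid D2(2) D3(2) TQ DQ Qb by linarith
    next
      assume "jm = j2" "j1 \<le> jd" "j3 \<le> jd"
      then have "P2 = Q" "P1 \<le> Dm" "P3 \<le> Dm" using mono_d by (auto simp: P1_def P2_def P3_def Q_def)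
      moreover have "P2 / 2 - 4 \<le> \<bar>m2\<bar>" using D2(3) jm1 \<open>jm = j2\<close> by simp
      ultimately show False using rb rid D1(2) D3(2) TQ DQ Qb by linarith
    next
      assume "jm = j3" "j1 \<le> jd" "j2 \<le> jd"
      then have "P3 = Q" "P1 \<le> Dm" "P2 \<le> Dm" using mono_d by (auto simp: P1_def P2_def P3_def Q_def)
      moreover have "P3 / 2 - 4 \<le> \<bar>m3\<bar>" using D3(3) jm1 \<open>jm = j3\<close> by simp
      ultimately show False using rb rid D1(2) D2(2) TQ DQ Qb by linarith
    qed
  qed
qed


lemma fin1:
  assumes L: "L \<le> sqrt (c * 2 powr e) * N" and c: "0 \<le> c" "c \<le> 1600" and N: "0 \<le> N"
    and e: "e / 2 = a + b"
  shows "L \<le> 40 * 2 powr a * 2 powr b * N"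
proof -
  have "sqrt (c * 2 powr e) = sqrt c * 2 powr (e / 2)" by (simp add: real_sqrt_mult p2_sqrt)
  also have "\<dots> = sqrt c * (2 powr a * 2 powr b)" by (simp add: e powr_add)
  also have "sqrt c \<le> 40"
  proof -
    have "sqrt c \<le> sqrt (40^2)" by (rule real_sqrt_le_mono) (use c in simp)
    then show ?thesis by simp
  qed
  then have "sqrt c * (2 powr a * 2 powr b) \<le> 40 * (2 powr a * 2 powr b)"
    by (rule mult_right_mono) simp
  finally have "sqrt (c * 2 powr e) \<le> 40 * 2 powr a * 2 powr b" by (simp add: mult.assoc)
  then have "sqrt (c * 2 powr e) * N \<le> 40 * 2 powr a * 2 powr b * N" by (rule mult_right_mono) (rule N)
  with L show ?thesis by linarith
qed

lemma fin2:
  assumes L: "L \<le> sqrt (c * 2 powr e) * N" and c: "0 \<le> c" "c \<le> 1600" and N: "0 \<le> N"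
    and e: "e / 2 = a"
  shows "L \<le> 40 * 2 powr a * N"
  using fin1[OF L c N, of a 0] e by simp

lemma pick_a:
  fixes a1 a2 a3 b1 b2 b3 :: real
  shows "min a1 a2 + min b1 b2 \<le> min a1 (min a2 a3) + min b1 (min b2 b3)
    \<or> min a1 a3 + min b1 b3 \<le> min a1 (min a2 a3) + min b1 (min b2 b3)
    \<or> min a3 a2 + min b3 b2 \<le> min a1 (min a2 a3) + min b1 (min b2 b3)"
  by (auto simp: min_def)

lemma med_nat2:
  fixes j1 j2 j3 :: nat
  shows "(j1 \<le> j3 \<and> j2 \<le> j3 \<longrightarrow> min j1 j2 = min j1 (min j2 j3) \<and> max j1 j2 = med3 j1 j2 j3)
    \<and> (j2 \<le> j1 \<and> j3 \<le> j1 \<longrightarrow> min j3 j2 = min j1 (min j2 j3) \<and> max j3 j2 = med3 j1 j2 j3)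
    \<and> (j1 \<le> j2 \<and> j3 \<le> j2 \<longrightarrow> min j1 j3 = min j1 (min j2 j3) \<and> max j1 j3 = med3 j1 j2 j3)"
  unfolding med3_def by (auto simp: max_def min_def)

lemma c_arith:
  fixes a b K :: real
  assumes "b < 2 * K"
  shows "12 * 2 powr a * (48 * 2 powr (b - K) + 7 * 2 powr (b / 2)) \<le> 660 * 2 powr (a + b / 2)"
proof -
  have "(2::real) powr (b - K) \<le> 2 powr (b / 2)" by (rule p2_mono) (use assms in linarith)
  then have "48 * 2 powr (b - K) + 7 * 2 powr (b / 2) \<le> 55 * (2::real) powr (b / 2)" by linarith
  then have "12 * 2 powr a * (48 * 2 powr (b - K) + 7 * 2 powr (b / 2)) \<le> 12 * 2 powr a * (55 * 2 powr (b / 2))"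
    by (rule mult_left_mono) simp
  also have "\<dots> = 660 * 2 powr (a + b / 2)" by (simp add: powr_add)
  finally show ?thesis .
qed

theorem corollary6p2:
  "\<exists>C::real. \<forall>(k1::int) (k2::int) (k3::int) (j1::nat) (j2::nat) (j3::nat)
      (f1::real \<times> real \<Rightarrow> complex) (f2::real \<times> real \<Rightarrow> complex).
    is_L2 f1 \<and> is_L2 f2 \<and>
    (\<forall>x. x \<notin> Dset k1 j1 \<longrightarrow> f1 x = 0) \<and> (\<forall>x. x \<notin> Dset k2 j2 \<longrightarrow> f2 x = 0) \<longrightarrow>
    (let F = (\<lambda>x. indicator (Dset k3 j3) x * conv2 f1 f2 x);
         N = L2norm f1 * L2norm f2;
         kmin = min k1 (min k2 k3); kmax = max k1 (max k2 k3); kmed = med3 k1 k2 k3;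
         jmin = min j1 (min j2 j3); jmax = max j1 (max j2 j3); jmed = med3 j1 j2 j3;
         kt = kmin + kmed;
         S = real j1 + real j2 + real j3
     in
      L2norm F \<le> C * 2 powr (real_of_int kmin / 2) * 2 powr (real jmin / 2) * N
    \<and> (kmax \<ge> kmin + 5 \<longrightarrow>
         L2norm F \<le> C * 2 powr (S / 2) * 2 powr (- (real j1 + real_of_int k1) / 2) * N
       \<and> L2norm F \<le> C * 2 powr (S / 2) * 2 powr (- (real j2 + real_of_int k2) / 2) * N
       \<and> L2norm F \<le> C * 2 powr (S / 2) * 2 powr (- (real j3 + real_of_int k3) / 2) * N)
    \<and> L2norm F \<le> C * 2 powr (real jmin / 2 + real jmed / 4) * N
    \<and> (\<not> (kmax \<le> kmed + 2 \<and>
           ((kt - 8 \<le> int jmax \<and> int jmax \<le> kt + 8)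
            \<or> (int jmax \<ge> kt + 8 \<and> jmax - jmed \<le> 10)))
        \<longrightarrow> (AE x in lebesgue. F x = 0)))"
  proof (rule exI[where x=40], intro allI impI)
  fix k1 k2 k3 :: int and j1 j2 j3 :: nat and f1 f2 :: "real \<times> real \<Rightarrow> complex"
  assume H: "is_L2 f1 \<and> is_L2 f2 \<and> (\<forall>x. x \<notin> Dset k1 j1 \<longrightarrow> f1 x = 0) \<and> (\<forall>x. x \<notin> Dset k2 j2 \<longrightarrow> f2 x = 0)"
  then have L1: "is_L2 f1" and L2: "is_L2 f2" and sd1: "\<forall>x. x \<notin> Dset k1 j1 \<longrightarrow> f1 x = 0"
    and sd2: "\<forall>x. x \<notin> Dset k2 j2 \<longrightarrow> f2 x = 0" by auto
  define F where "F = (\<lambda>x. indicator (Dset k3 j3) x * conv2 f1 f2 x)"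
  define N where "N = L2norm f1 * L2norm f2"
  define kmin where "kmin = min k1 (min k2 k3)"
  define kmax where "kmax = max k1 (max k2 k3)"
  define kmed where "kmed = med3 k1 k2 k3"
  define jmin where "jmin = min j1 (min j2 j3)"
  define jmax where "jmax = max j1 (max j2 j3)"
  define jmed where "jmed = med3 j1 j2 j3"
  define S where "S = real j1 + real j2 + real j3"
  have N0: "N \<ge> 0" by (simp add: N_def L2norm_def)
  have s1: "\<forall>x. x \<notin> G k1 (Rj j1) \<longrightarrow> f1 x = 0" using sd1 Dset_G by blast
  have s2: "\<forall>x. x \<notin> G k2 (Rj j2) \<longrightarrow> f2 x = 0" using sd2 Dset_G by blast
  have MS: "L2norm F \<le> sqrt M * N" if "good (G k1 (Rj j1)) (G k2 (Rj j2)) (G k3 (Rj j3)) M" "M \<ge> 0" for M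
    unfolding F_def N_def mult.assoc[symmetric]
    by (rule master[OF L1 L2 s1 s2 G_borel G_borel G_borel Dset_G that])
  define X where "X = real jmin + real_of_int kmin"
  have goodA: "good (G k1 (Rj j1)) (G k2 (Rj j2)) (G k3 (Rj j3)) (48 * 2 powr X)"
  proof -
    have X: "X = min (real j1) (min (real j2) (real j3)) + min (real_of_int k1) (min (real_of_int k2) (real_of_int k3))"
      by (simp add: X_def jmin_def kmin_def of_nat_min of_int_min)
    have pk: "min (real j1) (real j2) + min (real_of_int k1) (real_of_int k2) \<le> X
      \<or> min (real j1) (real j3) + min (real_of_int k1) (real_of_int k3) \<le> X
      \<or> min (real j3) (real j2) + min (real_of_int k3) (real_of_int k2) \<le> X"
      unfolding X by (rule pick_a)
    from pk show ?thesis
    proof (elim disjE)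
      assume h: "min (real j1) (real j2) + min (real_of_int k1) (real_of_int k2) \<le> X"
      show ?thesis by (rule good_mono[OF g1a]) (use h in \<open>simp add: p2_mono\<close>)
    next
      assume h: "min (real j1) (real j3) + min (real_of_int k1) (real_of_int k3) \<le> X"
      show ?thesis by (rule good_mono[OF g2a]) (use h in \<open>simp add: p2_mono\<close>)
    next
      assume h: "min (real j3) (real j2) + min (real_of_int k3) (real_of_int k2) \<le> X"
      show ?thesis by (rule good_mono[OF g3a]) (use h in \<open>simp add: p2_mono\<close>)
    qed
  qed
  have pa: "L2norm F \<le> 40 * 2 powr (real_of_int kmin / 2) * 2 powr (real jmin / 2) * N"
    by (rule fin1[OF MS[OF goodA] _ _ N0]) (simp_all add: X_def)
  have pb: "kmax \<ge> kmin + 5 \<longrightarrow>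
         L2norm F \<le> 40 * 2 powr (S / 2) * 2 powr (- (real j1 + real_of_int k1) / 2) * N
       \<and> L2norm F \<le> 40 * 2 powr (S / 2) * 2 powr (- (real j2 + real_of_int k2) / 2) * N
       \<and> L2norm F \<le> 40 * 2 powr (S / 2) * 2 powr (- (real j3 + real_of_int k3) / 2) * N"
  proof
    assume kk0: "kmax \<ge> kmin + 5"
    then have kk: "max k1 (max k2 k3) \<ge> min k1 (min k2 k3) + 5" by (simp add: kmax_def kmin_def)
    show "L2norm F \<le> 40 * 2 powr (S / 2) * 2 powr (- (real j1 + real_of_int k1) / 2) * N
       \<and> L2norm F \<le> 40 * 2 powr (S / 2) * 2 powr (- (real j2 + real_of_int k2) / 2) * N
       \<and> L2norm F \<le> 40 * 2 powr (S / 2) * 2 powr (- (real j3 + real_of_int k3) / 2) * N"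
    proof (intro conjI)
      show "L2norm F \<le> 40 * 2 powr (S / 2) * 2 powr (- (real j1 + real_of_int k1) / 2) * N"
        by (rule fin1[OF MS[OF g3b[OF kk]] _ _ N0]) (simp_all add: S_def field_simps)
      show "L2norm F \<le> 40 * 2 powr (S / 2) * 2 powr (- (real j2 + real_of_int k2) / 2) * N"
        by (rule fin1[OF MS[OF g2b[OF kk]] _ _ N0]) (simp_all add: S_def field_simps)
      show "L2norm F \<le> 40 * 2 powr (S / 2) * 2 powr (- (real j3 + real_of_int k3) / 2) * N"
        by (rule fin1[OF MS[OF g1b[OF kk]] _ _ N0]) (simp_all add: S_def field_simps)
    qed
  qed
  have pc: "L2norm F \<le> 40 * 2 powr (real jmin / 2 + real jmed / 4) * N"
  proof (cases "2 * real_of_int kmin \<le> real jmed")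
    case True
    have "good (G k1 (Rj j1)) (G k2 (Rj j2)) (G k3 (Rj j3)) (48 * 2 powr (real jmin + real jmed / 2))"
      by (rule good_mono[OF goodA]) (use True in \<open>simp add: X_def p2_mono\<close>)
    from MS[OF this] show ?thesis by (rule fin2) (simp_all add: N0)
  next
    case False
    have kd: "real jmed < 2 * real_of_int k1" "real jmed < 2 * real_of_int k2" "real jmed < 2 * real_of_int k3"
      using False by (auto simp: kmin_def)
    note mn = med_nat2[of j1 j3 j2]
    have G660: "good (G k1 (Rj j1)) (G k2 (Rj j2)) (G k3 (Rj j3)) (660 * 2 powr (real jmin + real jmed / 2))"
    proof (cases "j1 \<le> j3 \<and> j2 \<le> j3")
      case True
      then have "min j1 j2 = min j1 (min j2 j3)" "max j1 j2 = med3 j1 j2 j3" using mn by blast+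
      then have e: "min (real j1) (real j2) = real jmin" "max (real j1) (real j2) = real jmed"
        unfolding jmin_def jmed_def by (simp_all only: of_nat_min[symmetric] of_nat_max[symmetric])
      show ?thesis by (rule good_mono[OF g1c]) (unfold e, rule c_arith[OF kd(3)])
    next
      case False
      show ?thesis
      proof (cases "j2 \<le> j1 \<and> j3 \<le> j1")
        case True
        then have "min j3 j2 = min j1 (min j2 j3)" "max j3 j2 = med3 j1 j2 j3" using mn by blast+
        then have e: "min (real j3) (real j2) = real jmin" "max (real j3) (real j2) = real jmed"
          unfolding jmin_def jmed_def by (simp_all only: of_nat_min[symmetric] of_nat_max[symmetric])
        show ?thesis by (rule good_mono[OF g3c]) (unfold e, rule c_arith[OF kd(1)])
      next
        case False2: False
        then have "j1 \<le> j2 \<and> j3 \<le> j2" using False by linarith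
        then have "min j1 j3 = min j1 (min j2 j3)" "max j1 j3 = med3 j1 j2 j3" using mn by blast+
        then have e: "min (real j1) (real j3) = real jmin" "max (real j1) (real j3) = real jmed"
          unfolding jmin_def jmed_def by (simp_all only: of_nat_min[symmetric] of_nat_max[symmetric])
        show ?thesis by (rule good_mono[OF g2c]) (unfold e, rule c_arith[OF kd(2)])
      qed
    qed
    from MS[OF G660] show ?thesis by (rule fin2) (simp_all add: N0)
  qed
  have pd: "\<not> (kmax \<le> kmed + 2 \<and>
           ((kmin + kmed - 8 \<le> int jmax \<and> int jmax \<le> kmin + kmed + 8)
            \<or> (int jmax \<ge> kmin + kmed + 8 \<and> jmax - jmed \<le> 10)))
        \<longrightarrow> (AE x in lebesgue. F x = 0)"
  proof
    assume nd: "\<not> (kmax \<le> kmed + 2 \<and>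
           ((kmin + kmed - 8 \<le> int jmax \<and> int jmax \<le> kmin + kmed + 8)
            \<or> (int jmax \<ge> kmin + kmed + 8 \<and> jmax - jmed \<le> 10)))"
    have "F x = 0" for x
    proof (cases "x \<in> Dset k3 j3")
      case False then show ?thesis by (simp add: F_def)
    next
      case xD: True
      define Fin where "Fin = {2 * 2 powr real_of_int k1, - (2 * 2 powr real_of_int k1),
          fst x - 2 * 2 powr real_of_int k2, fst x + 2 * 2 powr real_of_int k2}"
      have "conv2 f1 f2 x = 0"
      proof (rule conv_zero)
        show "finite Fin" by (simp add: Fin_def)
        show "\<forall>y. f1 y * f2 (x - y) \<noteq> 0 \<longrightarrow> fst y \<in> Fin"
        proof (intro allI impI)
          fix y assume ne: "f1 y * f2 (x - y) \<noteq> 0"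
          then have "f1 y \<noteq> 0" "f2 (x - y) \<noteq> 0" by auto
          then have yD: "y \<in> Dset k1 j1" and zD: "x - y \<in> Dset k2 j2" using sd1 sd2 by blast+
          show "fst y \<in> Fin"
          proof (cases "kmax \<le> kmed + 2")
            case False
            then have k: "max k1 (max k2 k3) > med3 k1 k2 k3 + 2" unfolding kmax_def kmed_def by linarith
            have a: "fst y \<in> Iset k1" using Dset_mod[of "fst y" "snd y" k1 j1] yD by simp
            have "x - y = (fst x - fst y, snd x - snd y)" by (simp add: prod_eq_iff)
            then have b: "fst x - fst y \<in> Iset k2" using Dset_mod[of "fst x - fst y" "snd x - snd y" k2 j2] zD by simp
            have c: "fst y + (fst x - fst y) \<in> Iset k3" using Dset_mod[of "fst x" "snd x" k3 j3] xD by simp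
            from dk[OF a b c k] show ?thesis by (auto simp: Fin_def)
          next
            case True
            with nd have cs: "int (max j1 (max j2 j3)) < min k1 (min k2 k3) + med3 k1 k2 k3 - 8 \<or>
              (int (max j1 (max j2 j3)) > min k1 (min k2 k3) + med3 k1 k2 k3 + 8 \<and> max j1 (max j2 j3) - med3 j1 j2 j3 > 10)"
              unfolding kmin_def kmed_def jmax_def jmed_def by linarith
            from dj[OF yD zD xD cs] show ?thesis ..
          qed
        qed
      qed
      then show ?thesis by (simp add: F_def)
    qed
    then show "AE x in lebesgue. F x = 0" by simp
  qed
  show "let F = (\<lambda>x. indicator (Dset k3 j3) x * conv2 f1 f2 x);
         N = L2norm f1 * L2norm f2;
         kmin = min k1 (min k2 k3); kmax = max k1 (max k2 k3); kmed = med3 k1 k2 k3;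
         jmin = min j1 (min j2 j3); jmax = max j1 (max j2 j3); jmed = med3 j1 j2 j3;
         kt = kmin + kmed;
         S = real j1 + real j2 + real j3
     in
      L2norm F \<le> 40 * 2 powr (real_of_int kmin / 2) * 2 powr (real jmin / 2) * N
    \<and> (kmax \<ge> kmin + 5 \<longrightarrow>
         L2norm F \<le> 40 * 2 powr (S / 2) * 2 powr (- (real j1 + real_of_int k1) / 2) * N
       \<and> L2norm F \<le> 40 * 2 powr (S / 2) * 2 powr (- (real j2 + real_of_int k2) / 2) * N
       \<and> L2norm F \<le> 40 * 2 powr (S / 2) * 2 powr (- (real j3 + real_of_int k3) / 2) * N)
    \<and> L2norm F \<le> 40 * 2 powr (real jmin / 2 + real jmed / 4) * N
    \<and> (\<not> (kmax \<le> kmed + 2 \<and>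
           ((kt - 8 \<le> int jmax \<and> int jmax \<le> kt + 8)
            \<or> (int jmax \<ge> kt + 8 \<and> jmax - jmed \<le> 10)))
        \<longrightarrow> (AE x in lebesgue. F x = 0))"
    unfolding Let_def F_def[symmetric] N_def[symmetric] kmin_def[symmetric] kmax_def[symmetric]
      kmed_def[symmetric] jmin_def[symmetric] jmax_def[symmetric] jmed_def[symmetric] S_def[symmetric]
    using pa pb pc pd by blast
qed

end
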